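(* Let $G$ be a finite simple graph with edge weight function $w$ and vertex weight function $w_1$, let $\theta$ be a real number, and let $A=A_{(\theta,w,w_1)}(G)$. Then (a) $A_{(\theta,w,w_1)}(G\setminus A)=\varnothing$, $D_{(\theta,w,w_1)}(G\setminus A)=D_{(\theta,w,w_1)}(G)$, $P_{(\theta,w,w_1)}(G\setminus A)=P_{(\theta,w,w_1)}(G)$, and $N_{(\theta,w,w_1)}(G\setminus A)=N_{(\theta,w,w_1)}(G)$; (b) $G\setminus A$ has exactly $|A|+\mathrm{mult}(\theta,G)$ components that are $(\theta,w,w_1)$-critical; (c) if $H$ is a component of $G\setminus A$, then either $H$ is $(\theta,w,w_1)$-critical or $\mathrm{mult}(\theta,H)=0$; (d) the subgraph induced by $D_{(\theta,w,w_1)}(G)$ consists of all the $(\theta,w,w_1)$-critical components of $G\setminus A$.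
   Context: An edge weight function $w$ assigns a nonzero complex number to each edge; a vertex weight function $w_1$ assigns a real number (possibly $0$) to each vertex. Subgraphs carry the restricted weights; $G\setminus u$ deletes vertex $u$ and its incident edges, and $G\setminus A$ deletes all vertices of $A$. For $B\subseteq E(G)$, $w(B)=\prod_{e\in B}w(e)$. $\mu_w(G,x)=\sum_{M}(-1)^{|M|}|w(M)|^2x^{n-2|M|}$ over all matchings $M$ (including empty), $n=|V(G)|$. $\eta_{(w,w_1)}(G,x)=\sum_{S\subseteq V(G)}(-1)^{|V(G)\setminus S|}\big(\prod_{v\in V(G)\setminus S}w_1(v)\big)\mu_w(G[S],x)$ with $G[S]$ the induced subgraph, and $\mu_w,\eta_{(w,w_1)}$ of the empty graph equal to $1$. $\mathrm{mult}(\theta,H)$ is the multiplicity of $\theta$ as a root of $\eta_{(w,w_1)}(H,x)$ ($0$ if not a root). A vertex $v$ of $H$ is $(\theta,w,w_1)$-essential / neutral / positive if $\mathrm{mult}(\theta,H\setminus v)$ equals $\mathrm{mult}(\theta,H)-1$ / $\mathrm{mult}(\theta,H)$ / $\mathrm{mult}(\theta,H)+1$; $v$ is $(\theta,w,w_1)$-special if not essential but adjacent to an essential vertex. $D_{(\theta,w,w_1)}(H)$, $A_{(\theta,w,w_1)}(H)$, $N_{(\theta,w,w_1)}(H)$ are the sets of essential, special, neutral vertices of $H$, and $P_{(\theta,w,w_1)}(H)$ is the set of positive vertices of $H$ that are not special. $H$ is $(\theta,w,w_1)$-critical if all its vertices are essential and $\mathrm{mult}(\theta,H)=1$. *)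

theory Defs
  imports Complex_Main "HOL-Computational_Algebra.Polynomial"
begin

type_synonym 'a graph = "'a set \<times> 'a set set"

definition verts :: "'a graph \<Rightarrow> 'a set" where "verts G = fst G"
definition edges :: "'a graph \<Rightarrow> 'a set set" where "edges G = snd G"

definition simple_graph :: "'a graph \<Rightarrow> bool" where
  "simple_graph G \<longleftrightarrow> finite (verts G) \<and>
     (\<forall>e\<in>edges G. \<exists>u v. u \<in> verts G \<and> v \<in> verts G \<and> u \<noteq> v \<and> e = {u, v})"

definition edge_weight :: "'a graph \<Rightarrow> ('a set \<Rightarrow> complex) \<Rightarrow> bool" where
  "edge_weight G w \<longleftrightarrow> (\<forall>e\<in>edges G. w e \<noteq> 0)"

definition induced :: "'a graph \<Rightarrow> 'a set \<Rightarrow> 'a graph" where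
  "induced G S = (verts G \<inter> S, {e \<in> edges G. e \<subseteq> S})"

definition del_set :: "'a graph \<Rightarrow> 'a set \<Rightarrow> 'a graph" where
  "del_set G A = induced G (verts G - A)"

definition del_vert :: "'a graph \<Rightarrow> 'a \<Rightarrow> 'a graph" where
  "del_vert G v = del_set G {v}"

definition adj :: "'a graph \<Rightarrow> 'a \<Rightarrow> 'a \<Rightarrow> bool" where
  "adj G u v \<longleftrightarrow> {u, v} \<in> edges G"

definition matchings :: "'a graph \<Rightarrow> 'a set set set" where
  "matchings G = {M. M \<subseteq> edges G \<and> (\<forall>e\<in>M. \<forall>f\<in>M. e \<noteq> f \<longrightarrow> e \<inter> f = {})}"

definition mu :: "('a set \<Rightarrow> complex) \<Rightarrow> 'a graph \<Rightarrow> real poly" where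
  "mu w G = (\<Sum>M\<in>matchings G.
      smult ((-1) ^ card M * (cmod (\<Prod>e\<in>M. w e))\<^sup>2)
            (monom 1 (card (verts G) - 2 * card M)))"

definition eta :: "('a set \<Rightarrow> complex) \<Rightarrow> ('a \<Rightarrow> real) \<Rightarrow> 'a graph \<Rightarrow> real poly" where
  "eta w w1 G = (\<Sum>S\<in>Pow (verts G).
      smult ((-1) ^ card (verts G - S) * (\<Prod>v\<in>verts G - S. w1 v))
            (mu w (induced G S)))"

definition mult :: "('a set \<Rightarrow> complex) \<Rightarrow> ('a \<Rightarrow> real) \<Rightarrow> real \<Rightarrow> 'a graph \<Rightarrow> nat" where
  "mult w w1 \<theta> G = order \<theta> (eta w w1 G)"

definition essential where
  "essential w w1 \<theta> H v \<longleftrightarrow> v \<in> verts H \<and>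
     int (mult w w1 \<theta> (del_vert H v)) = int (mult w w1 \<theta> H) - 1"

definition neutral where
  "neutral w w1 \<theta> H v \<longleftrightarrow> v \<in> verts H \<and>
     mult w w1 \<theta> (del_vert H v) = mult w w1 \<theta> H"

definition positive where
  "positive w w1 \<theta> H v \<longleftrightarrow> v \<in> verts H \<and>
     mult w w1 \<theta> (del_vert H v) = mult w w1 \<theta> H + 1"

definition special where
  "special w w1 \<theta> H v \<longleftrightarrow> v \<in> verts H \<and> \<not> essential w w1 \<theta> H v \<and>
     (\<exists>u. essential w w1 \<theta> H u \<and> adj H u v)"

definition Dset where "Dset w w1 \<theta> H = {v. essential w w1 \<theta> H v}"
definition Aset where "Aset w w1 \<theta> H = {v. special w w1 \<theta> H v}"
definition Nset where "Nset w w1 \<theta> H = {v. neutral w w1 \<theta> H v}"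
definition Pset where
  "Pset w w1 \<theta> H = {v. positive w w1 \<theta> H v \<and> \<not> special w w1 \<theta> H v}"

definition critical where
  "critical w w1 \<theta> H \<longleftrightarrow> (\<forall>v\<in>verts H. essential w w1 \<theta> H v) \<and> mult w w1 \<theta> H = 1"

definition components :: "'a graph \<Rightarrow> 'a set set" where
  "components G = {C. \<exists>v\<in>verts G. C = {u \<in> verts G. (adj G)\<^sup>*\<^sup>* v u}}"

end

theory Submission
  imports Defs "HOL-Computational_Algebra.Polynomial"
begin


definition sh :: "real \<Rightarrow> real poly \<Rightarrow> real poly" where
  "sh th p = pcompose p [:th, 1:]"
definition tc :: "real \<Rightarrow> real poly \<Rightarrow> nat \<Rightarrow> real" where
  "tc th p n = coeff (sh th p) n"
definition van :: "real \<Rightarrow> real poly \<Rightarrow> nat \<Rightarrow> bool" where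
  "van th p n \<longleftrightarrow> (\<forall>i<n. tc th p i = 0)"

lemma sh_add[simp]: "sh th (p + q) = sh th p + sh th q" by (simp add: sh_def pcompose_add)
lemma sh_diff[simp]: "sh th (p - q) = sh th p - sh th q" by (simp add: sh_def pcompose_diff)
lemma sh_uminus[simp]: "sh th (- q) = - sh th q" by (simp add: sh_def pcompose_uminus)
lemma sh_smult[simp]: "sh th (smult c q) = smult c (sh th q)" by (simp add: sh_def pcompose_smult)
lemma sh_mult[simp]: "sh th (p * q) = sh th p * sh th q" by (simp add: sh_def pcompose_mult)
lemma sh_sum[simp]: "sh th (sum f A) = (\<Sum>i\<in>A. sh th (f i))" by (simp add: sh_def pcompose_sum)
lemma sh_0[simp]: "sh th 0 = 0" by (simp add: sh_def)

lemma sh_inv: "pcompose (sh th p) [:-th, 1:] = p"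
proof -
  have "pcompose [:th, 1:] [:-th, 1:] = [:0,1:]" by (simp add: pcompose_pCons)
  thus ?thesis unfolding sh_def by (metis pcompose_assoc pcompose_idR)
qed

lemma sh_eq_0[simp]: "sh th p = 0 \<longleftrightarrow> p = 0"
  by (metis sh_0 sh_inv pcompose_0)

lemma sh_1[simp]: "sh th 1 = 1" by (simp add: sh_def pcompose_1)

lemma sh_power: "sh th (p ^ n) = (sh th p) ^ n"
  by (induct n) (simp_all add: sh_def pcompose_mult pcompose_1)

lemma sh_lin_power: "sh th ([:-th, 1:]^n) = monom 1 n"
proof -
  have "sh th [:-th,1:] = [:0,1:]" by (simp add: sh_def pcompose_pCons)
  then show ?thesis by (simp add: sh_power monom_altdef)
qed

lemma monom_dvd_sh: "[:-th,1:]^n dvd p \<longleftrightarrow> monom 1 n dvd sh th p"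
proof
  assume "[:-th,1:]^n dvd p"
  then obtain q where "p = [:-th,1:]^n * q" by (auto elim: dvdE)
  then show "monom 1 n dvd sh th p" by (simp add: sh_lin_power)
next
  assume "monom 1 n dvd sh th p"
  then obtain r where r: "sh th p = monom 1 n * r" by (auto elim: dvdE)
  have pw: "\<And>k. pcompose ([:0,1:]^k) [:-th,1:] = ([:-th,1:]::real poly)^k"
  proof -
    fix k show "pcompose ([:0,1:]^k) [:-th,1:] = ([:-th,1:]::real poly)^k"
      by (induct k) (simp_all add: pcompose_1 pcompose_mult pcompose_pCons)
  qed
  have "pcompose (monom (1::real) n) [:-th,1:] = [:-th,1:]^n"
    by (simp add: monom_altdef pw)
  then have "p = [:-th,1:]^n * pcompose r [:-th,1:]"
    using sh_inv[of th p] r by (simp add: pcompose_mult)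
  then show "[:-th,1:]^n dvd p" by simp
qed

lemma order_sh: "order th p = order 0 (sh th p)"
proof (cases "p = 0")
  case True then show ?thesis by (simp add: order_def)
next
  case False
  have "\<And>n. n \<le> order th p \<longleftrightarrow> n \<le> order 0 (sh th p)"
    using monom_dvd_sh[of th _ p] order_divides[of th _ p] order_divides[of 0 _ "sh th p"] False
    by (simp add: monom_altdef)
  then show ?thesis by (meson le_antisym order_refl)
qed

lemma order0_coeffs:
  fixes q :: "real poly"
  assumes "q \<noteq> 0"
  shows "(\<forall>i<order 0 q. coeff q i = 0) \<and> coeff q (order 0 q) \<noteq> 0"
proof -
  obtain r where r: "q = [:-0,1:]^order 0 q * r" "\<not> [:-0,1:] dvd r"
    using order_decomp[OF assms] by blast
  define k where "k = order 0 q"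
  have m: "q = monom 1 k * r" using r(1) by (simp add: monom_altdef k_def)
  have "poly r 0 \<noteq> 0" using r(2) by (simp add: dvd_iff_poly_eq_0)
  then have "coeff r 0 \<noteq> 0" by (simp add: poly_0_coeff_0)
  then have "(\<forall>i<k. coeff q i = 0) \<and> coeff q k \<noteq> 0"
    unfolding m by (simp add: coeff_monom_mult)
  then show ?thesis by (simp add: k_def)
qed

lemma van_order: "p \<noteq> 0 \<Longrightarrow> van th p (order th p) \<and> tc th p (order th p) \<noteq> 0"
  using order0_coeffs[of "sh th p"] using order_sh[of th p] by (simp add: van_def tc_def)

lemma van_le: "p \<noteq> 0 \<Longrightarrow> van th p n \<Longrightarrow> n \<le> order th p"
  using van_order[of p th] unfolding van_def by (meson not_le)

lemma order_eqI: "van th p n \<Longrightarrow> tc th p n \<noteq> 0 \<Longrightarrow> order th p = n"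
proof -
  assume a: "van th p n" "tc th p n \<noteq> 0"
  then have p: "p \<noteq> 0" by (auto simp: tc_def)
  have "n \<le> order th p" using van_le[OF p a(1)] .
  moreover have "\<not> n < order th p" using van_order[OF p] a(2) unfolding van_def by blast
  ultimately show ?thesis by simp
qed

lemma van_mono: "van th p n \<Longrightarrow> m \<le> n \<Longrightarrow> van th p m" by (auto simp: van_def)

lemma van_order_iff: "p \<noteq> 0 \<Longrightarrow> van th p n \<longleftrightarrow> n \<le> order th p"
  using van_le van_order van_mono by blast

lemma tc_add[simp]: "tc th (p + q) n = tc th p n + tc th q n" by (simp add: tc_def)
lemma tc_diff[simp]: "tc th (p - q) n = tc th p n - tc th q n" by (simp add: tc_def)
lemma tc_uminus[simp]: "tc th (- q) n = - tc th q n" by (simp add: tc_def)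
lemma tc_smult[simp]: "tc th (smult c q) n = c * tc th q n" by (simp add: tc_def)
lemma tc_sum[simp]: "tc th (sum f A) n = (\<Sum>i\<in>A. tc th (f i) n)"
  by (simp add: tc_def coeff_sum)
lemma tc_0[simp]: "tc th 0 n = 0" by (simp add: tc_def)

lemma van_add: "van th p n \<Longrightarrow> van th q n \<Longrightarrow> van th (p + q) n" by (simp add: van_def)
lemma van_diff: "van th p n \<Longrightarrow> van th q n \<Longrightarrow> van th (p - q) n" by (simp add: van_def)
lemma van_uminus: "van th p n \<Longrightarrow> van th (- p) n" by (simp add: van_def)
lemma van_smult: "van th p n \<Longrightarrow> van th (smult c p) n" by (simp add: van_def)
lemma van_sum: "(\<And>i. i \<in> A \<Longrightarrow> van th (f i) n) \<Longrightarrow> van th (sum f A) n" by (simp add: van_def)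
lemma van_0[simp]: "van th p 0" by (simp add: van_def)
lemma van_zero[simp]: "van th 0 n" by (simp add: van_def)

lemma tc_mult_low:
  assumes "van th p a" "van th q b" "i < a + b"
  shows "tc th (p * q) i = 0"
proof -
  have "tc th (p * q) i = (\<Sum>j\<le>i. tc th p j * tc th q (i - j))"
    by (simp add: tc_def coeff_mult)
  also have "\<dots> = 0"
  proof (intro sum.neutral ballI)
    fix j assume "j \<in> {..i}"
    show "tc th p j * tc th q (i - j) = 0"
    proof (cases "j < a")
      case True then show ?thesis using assms(1) by (simp add: van_def)
    next
      case False then have "i - j < b" using assms(3) \<open>j \<in> {..i}\<close> by auto
      then show ?thesis using assms(2) by (simp add: van_def)
    qed
  qed
  finally show ?thesis .
qed

lemma van_mult: "van th p a \<Longrightarrow> van th q b \<Longrightarrow> van th (p * q) (a + b)"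
  using tc_mult_low by (auto simp: van_def)

lemma tc_mult:
  assumes "van th p a" "van th q b"
  shows "tc th (p * q) (a + b) = tc th p a * tc th q b"
proof -
  have "tc th (p * q) (a+b) = (\<Sum>j\<le>a+b. tc th p j * tc th q (a + b - j))"
    by (simp add: tc_def coeff_mult)
  also have "\<dots> = (\<Sum>j\<in>{a}. tc th p j * tc th q (a + b - j))"
  proof (intro sum.mono_neutral_right ballI)
    fix j assume j: "j \<in> {..a+b} - {a}"
    show "tc th p j * tc th q (a + b - j) = 0"
    proof (cases "j < a")
      case True then show ?thesis using assms(1) by (simp add: van_def)
    next
      case False then have "a + b - j < b" using j by auto
      then show ?thesis using assms(2) by (simp add: van_def)
    qed
  qed auto
  finally show ?thesis by (simp only: sum.insert_if finite.emptyI sum.empty) simp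
qed

lemma sh_pderiv: "sh th (pderiv p) = pderiv (sh th p)"
  by (simp add: sh_def pderiv_pcompose pderiv_pCons)

lemma tc_pderiv: "tc th (pderiv p) n = real (Suc n) * tc th p (Suc n)"
  by (simp add: tc_def sh_pderiv coeff_pderiv)

lemma van_pderiv: "van th p (Suc n) \<Longrightarrow> van th (pderiv p) n"
  by (auto simp: van_def tc_pderiv)

lemma sh_lin: "sh th [:c, 1:] = [:c + th, 1:]"
  by (simp add: sh_def pcompose_pCons)

lemma tc_lin0: "tc th [:-w, 1:] 0 = th - w" by (simp add: tc_def sh_lin)
lemma tc_lin1: "tc th [:-w, 1:] 1 = 1" by (simp add: tc_def sh_lin)

lemma van_lin1: "w = th \<Longrightarrow> van th [:-w, 1:] 1" by (simp add: van_def tc_lin0)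

definition good :: "real \<Rightarrow> real poly \<Rightarrow> bool" where
  "good th p \<longleftrightarrow> (\<forall>n. van th p n \<longrightarrow> tc th p n \<ge> 0 \<and> (tc th p n \<noteq> 0 \<longrightarrow> even n))"

lemma good_van_split:
  assumes "good th p" "good th q" "van th (p + q) n"
  shows "van th p n \<and> van th q n"
  using assms(3)
proof (induct n)
  case 0 then show ?case by simp
next
  case (Suc n)
  then have "van th (p+q) n" using van_mono[OF Suc(2), of n] by simp
  then have h: "van th p n" "van th q n" using Suc by auto
  have "tc th p n \<ge> 0" "tc th q n \<ge> 0" using h assms(1,2) by (auto simp: good_def)
  moreover have "tc th p n + tc th q n = 0" using Suc(2) by (simp add: van_def)
  ultimately have "tc th p n = 0" "tc th q n = 0" by auto
  then show ?case using h by (auto simp: van_def less_Suc_eq)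
qed

lemma good_add: "good th p \<Longrightarrow> good th q \<Longrightarrow> good th (p + q)"
proof -
  assume a: "good th p" "good th q"
  show "good th (p + q)" unfolding good_def
  proof (intro allI impI)
    fix n assume "van th (p+q) n"
    then have "van th p n" "van th q n" using good_van_split a by blast+
    then have "tc th p n \<ge> 0 \<and> (tc th p n \<noteq> 0 \<longrightarrow> even n)"
      "tc th q n \<ge> 0 \<and> (tc th q n \<noteq> 0 \<longrightarrow> even n)"
      using a unfolding good_def by blast+
    then show "0 \<le> tc th (p + q) n \<and> (tc th (p + q) n \<noteq> 0 \<longrightarrow> even n)"
      by auto
  qed
qed

lemma good_0[simp]: "good th 0" by (simp add: good_def)

lemma good_smult: "c \<ge> 0 \<Longrightarrow> good th p \<Longrightarrow> good th (smult c p)"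
  by (cases "c = 0") (auto simp: good_def van_def)

lemma good_sum: "finite A \<Longrightarrow> (\<And>i. i \<in> A \<Longrightarrow> good th (f i)) \<Longrightarrow> good th (sum f A)"
  by (induct A rule: finite_induct) (auto intro: good_add)

lemma good_order: "good th p \<Longrightarrow> p \<noteq> 0 \<Longrightarrow> even (order th p) \<and> tc th p (order th p) > 0"
  using van_order[of p th] unfolding good_def by force

lemma good_sq: "good th (q * q)"
proof (cases "q = 0")
  case True then show ?thesis by simp
next
  case False
  define j where "j = order th q"
  have vq: "van th q j" "tc th q j \<noteq> 0" using van_order[OF False] j_def by auto
  have v2: "van th (q*q) (j+j)" and t2: "tc th (q*q) (j+j) = tc th q j * tc th q j"
    using van_mult[OF vq(1) vq(1)] tc_mult[OF vq(1) vq(1)] by auto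
  show ?thesis unfolding good_def
  proof (intro allI impI)
    fix n assume n: "van th (q*q) n"
    show "0 \<le> tc th (q*q) n \<and> (tc th (q*q) n \<noteq> 0 \<longrightarrow> even n)"
    proof (cases "n < j + j")
      case True then show ?thesis using v2 by (simp add: van_def)
    next
      case False
      show ?thesis
      proof (cases "n = j + j")
        case True then show ?thesis using t2 by simp
      next
        case False2: False
        then have "j + j < n" using False by simp
        then have "tc th (q*q) (j+j) = 0" using n by (simp add: van_def)
        then show ?thesis using t2 vq by simp
      qed
    qed
  qed
qed

lemma good_nonvan:
  assumes "good th p" "q \<noteq> 0" "c > 0"
  shows "\<not> van th (p + smult c (q * q)) (2 * order th q + 1)"
proof
  assume "van th (p + smult c (q * q)) (2 * order th q + 1)"
  then have "van th (smult c (q*q)) (2 * order th q + 1)"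
    using good_van_split[OF assms(1) good_smult[OF _ good_sq]] assms(3) by auto
  then have "tc th (smult c (q*q)) (order th q + order th q) = 0" by (simp add: van_def)
  moreover have "tc th (q*q) (order th q + order th q) = tc th q (order th q) * tc th q (order th q)"
    using van_order[OF assms(2)] tc_mult by blast
  ultimately show False using van_order[OF assms(2)] assms(3) by simp
qed

lemma van_pderiv_mult:
  assumes "van th g a" "van th f k" "1 \<le> a + k"
  shows "van th (g * pderiv f) (a + k - 1) \<and>
         tc th (g * pderiv f) (a + k - 1) = real k * tc th g a * tc th f k"
proof (cases k)
  case 0
  have "van th (g * pderiv f) (a + 0)" using van_mult[OF assms(1), of "pderiv f" 0] by simp
  moreover have "a + k - 1 < a + 0" using 0 assms(3) by simp
  ultimately show ?thesis using 0 by (auto simp: van_def)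
next
  case (Suc k')
  have vf: "van th (pderiv f) k'" using van_pderiv assms(2) Suc by blast
  have "tc th (pderiv f) k' = real k * tc th f k" by (simp add: tc_pderiv Suc)
  then show ?thesis using van_mult[OF assms(1) vf] tc_mult[OF assms(1) vf] Suc by simp
qed

lemma W_low:
  assumes "van th f k" "van th g a" "a \<noteq> k"
  shows "van th (g * pderiv f - f * pderiv g) (a + k - 1) \<and>
         tc th (g * pderiv f - f * pderiv g) (a + k - 1) = (real k - real a) * tc th f k * tc th g a"
proof -
  have "1 \<le> a + k" using assms(3) by arith
  then have h1: "van th (g * pderiv f) (a + k - 1) \<and>
         tc th (g * pderiv f) (a + k - 1) = real k * tc th g a * tc th f k"
    and h2: "van th (f * pderiv g) (k + a - 1) \<and>
         tc th (f * pderiv g) (k + a - 1) = real a * tc th f k * tc th g a"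
    using van_pderiv_mult[OF assms(2,1)] van_pderiv_mult[OF assms(1,2)] by (auto simp: add.commute)
  have "k + a - 1 = a + k - 1" by simp
  then show ?thesis using h1 h2 by (auto intro: van_diff simp: algebra_simps)
qed


locale gr =
  fixes G :: "'a graph" and w :: "'a set \<Rightarrow> complex" and w1 :: "'a \<Rightarrow> real" and th :: real
  assumes sg: "simple_graph G" and ew: "edge_weight G w"
begin

abbreviation "V \<equiv> verts G"
abbreviation "E \<equiv> edges G"

definition P :: "'a set \<Rightarrow> real poly" where "P S = eta w w1 (induced G S)"
definition Mt :: "'a set \<Rightarrow> 'a set set set" where
  "Mt S = {M. M \<subseteq> E \<and> (\<forall>e\<in>M. e \<subseteq> S) \<and> (\<forall>e\<in>M. \<forall>f\<in>M. e \<noteq> f \<longrightarrow> e \<inter> f = {})}"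
definition wt :: "'a set set \<Rightarrow> real" where
  "wt M = (-1) ^ card M * (cmod (\<Prod>e\<in>M. w e))\<^sup>2"
definition X :: "'a \<Rightarrow> real poly" where "X v = [:- w1 v, 1:]"
definition Q :: "'a set \<Rightarrow> real poly" where
  "Q S = (\<Sum>M\<in>Mt S. smult (wt M) (\<Prod>v\<in>S - \<Union>M. X v))"

lemma finV: "finite V" using sg by (simp add: simple_graph_def)

lemma edge_form: "e \<in> E \<Longrightarrow> \<exists>u v. u \<in> V \<and> v \<in> V \<and> u \<noteq> v \<and> e = {u, v}"
  using sg by (auto simp: simple_graph_def)

lemma edge_sub: "e \<in> E \<Longrightarrow> e \<subseteq> V" using edge_form by blast

lemma finE: "finite E"
proof -
  have "E \<subseteq> Pow V" using edge_sub by blast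
  then show ?thesis using finV finite_subset by blast
qed

lemma edge_card: "e \<in> E \<Longrightarrow> card e = 2" using edge_form by fastforce

lemma edge_fin: "e \<in> E \<Longrightarrow> finite e" using edge_form by fastforce

lemma finMt: "finite (Mt S)"
proof -
  have "Mt S \<subseteq> Pow E" by (auto simp: Mt_def)
  then show ?thesis using finE finite_subset by blast
qed

lemma Mt_fin: "M \<in> Mt S \<Longrightarrow> finite M"
  using finE finite_subset by (auto simp: Mt_def)

lemma Mt_Union_sub: "M \<in> Mt S \<Longrightarrow> \<Union>M \<subseteq> S" by (auto simp: Mt_def)

lemma Mt_card_Union: "M \<in> Mt S \<Longrightarrow> card (\<Union>M) = 2 * card M"
proof -
  assume M: "M \<in> Mt S"
  have "pairwise disjnt M" using M by (auto simp: Mt_def pairwise_def disjnt_def)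
  moreover have "\<And>A. A \<in> M \<Longrightarrow> finite A" using M edge_fin by (auto simp: Mt_def)
  ultimately have "card (\<Union>M) = sum card M" by (rule card_Union_disjoint)
  also have "\<dots> = sum (\<lambda>_. 2) M" using M edge_card by (intro sum.cong) (auto simp: Mt_def)
  finally show ?thesis by simp
qed

lemma induced_induced: "induced (induced G S) T = induced G (S \<inter> T)"
  by (auto simp: induced_def verts_def edges_def)

lemma verts_induced: "verts (induced G S) = V \<inter> S" by (simp add: induced_def verts_def)
lemma edges_induced: "edges (induced G S) = {e \<in> E. e \<subseteq> S}" by (simp add: induced_def edges_def)

lemma matchings_induced: "matchings (induced G S) = Mt S"
  by (auto simp: matchings_def Mt_def edges_induced)

lemma Mt_mono: "T \<subseteq> S \<Longrightarrow> Mt T = {M \<in> Mt S. \<Union>M \<subseteq> T}"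
  by (auto simp: Mt_def)

lemma mu_induced: "T \<subseteq> V \<Longrightarrow>
  mu w (induced G T) = (\<Sum>M\<in>Mt T. smult (wt M) (monom 1 (card T - 2 * card M)))"
proof -
  assume "T \<subseteq> V"
  then have "verts (induced G T) = T" by (auto simp: verts_induced)
  then show ?thesis by (simp add: mu_def matchings_induced wt_def)
qed

lemma smult_sum2: "smult c (\<Sum>i\<in>A. f i) = (\<Sum>i\<in>A. smult c (f i))"
  by (induct A rule: infinite_finite_induct) (simp_all add: smult_add_right)

lemma prod_const_poly: "(\<Prod>v\<in>A. [:f v:]) = [:\<Prod>v\<in>A. f v:]"
  by (induct A rule: infinite_finite_induct) (simp_all add: mult.commute)

lemma prod_neg: "(\<Prod>v\<in>A. - (f v :: real)) = (-1) ^ card A * (\<Prod>v\<in>A. f v)"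
  by (induct A rule: infinite_finite_induct) simp_all

lemma inner_sum:
  assumes "finite S" "U \<subseteq> S"
  shows "(\<Sum>T\<in>{T \<in> Pow S. U \<subseteq> T}. smult ((-1) ^ card (S - T) * (\<Prod>v\<in>S - T. w1 v))
            (monom 1 (card T - card U))) = (\<Prod>v\<in>S - U. X v)"
proof -
  define R where "R = S - U"
  have finR: "finite R" using assms R_def by simp
  have "(\<Prod>v\<in>R. X v) = (\<Prod>v\<in>R. [:0,1:] + [:- w1 v:])" by (simp add: X_def)
  also have "\<dots> = (\<Sum>B\<in>Pow R. (\<Prod>v\<in>B. [:0,1:]) * (\<Prod>v\<in>R - B. [:- w1 v:]))"
    by (rule prod_add[OF finR])
  also have "\<dots> = (\<Sum>B\<in>Pow R. smult ((-1) ^ card (R - B) * (\<Prod>v\<in>R - B. w1 v)) (monom 1 (card B)))"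
  proof (intro sum.cong refl)
    fix B assume B: "B \<in> Pow R"
    have "(\<Prod>v\<in>B. [:0,1:]) = (monom 1 (card B) :: real poly)" by (simp add: monom_altdef)
    moreover have "(\<Prod>v\<in>R - B. [:- w1 v:]) = [:\<Prod>v\<in>R - B. - w1 v:]"
      by (rule prod_const_poly)
    moreover have "(\<Prod>v\<in>R - B. - w1 v) = (-1) ^ card (R - B) * (\<Prod>v\<in>R - B. w1 v)"
      by (rule prod_neg)
    ultimately show "(\<Prod>v\<in>B. [:0,1:]) * (\<Prod>v\<in>R - B. [:- w1 v:]) =
        smult ((-1) ^ card (R - B) * (\<Prod>v\<in>R - B. w1 v)) (monom 1 (card B))"
      by simp
  qed
  also have "\<dots> = (\<Sum>T\<in>{T \<in> Pow S. U \<subseteq> T}. smult ((-1) ^ card (S - T) * (\<Prod>v\<in>S - T. w1 v))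
            (monom 1 (card T - card U)))"
  proof (rule sum.reindex_bij_witness[of _ "\<lambda>T. T - U" "\<lambda>B. U \<union> B"])
    fix B assume B: "B \<in> Pow R"
    then have d: "U \<inter> B = {}" using R_def by auto
    have fU: "finite U" using assms finite_subset by blast
    have fB: "finite B" using B finR finite_subset by blast
    show "U \<union> B - U = B" using d by auto
    show "U \<union> B \<in> {T \<in> Pow S. U \<subseteq> T}" using B assms R_def by auto
    have "S - (U \<union> B) = R - B" using R_def by auto
    moreover have "card (U \<union> B) - card U = card B" using d fU fB by (simp add: card_Un_disjoint)
    ultimately show "smult ((-1) ^ card (S - (U \<union> B)) * (\<Prod>v\<in>S - (U \<union> B). w1 v))
            (monom 1 (card (U \<union> B) - card U)) =
        smult ((-1) ^ card (R - B) * (\<Prod>v\<in>R - B. w1 v)) (monom 1 (card B))" by simp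
  next
    fix T assume T: "T \<in> {T \<in> Pow S. U \<subseteq> T}"
    show "U \<union> (T - U) = T" using T by auto
    show "T - U \<in> Pow R" using T R_def by auto
  qed
  finally show ?thesis using R_def by simp
qed

lemma P_Q: "S \<subseteq> V \<Longrightarrow> P S = Q S"
proof -
  assume SV: "S \<subseteq> V"
  have fS: "finite S" using SV finV finite_subset by blast
  have vS: "verts (induced G S) = S" using SV by (auto simp: verts_induced)
  define c where "c T = (-1::real) ^ card (S - T) * (\<Prod>v\<in>S - T. w1 v)" for T
  have "P S = (\<Sum>T\<in>Pow S. smult (c T) (mu w (induced G T)))"
    unfolding P_def eta_def vS c_def
    by (intro sum.cong refl) (auto simp: induced_induced Int_absorb1)
  also have "\<dots> = (\<Sum>T\<in>Pow S. \<Sum>M\<in>{M \<in> Mt S. \<Union>M \<subseteq> T}.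
        smult (c T * wt M) (monom 1 (card T - 2 * card M)))"
  proof (intro sum.cong refl)
    fix T assume T: "T \<in> Pow S"
    then have "T \<subseteq> V" using SV by auto
    then show "smult (c T) (mu w (induced G T)) = (\<Sum>M\<in>{M \<in> Mt S. \<Union>M \<subseteq> T}.
        smult (c T * wt M) (monom 1 (card T - 2 * card M)))"
      using T by (simp add: mu_induced Mt_mono[of T S] smult_sum2)
  qed
  also have "\<dots> = (\<Sum>M\<in>Mt S. \<Sum>T\<in>{T \<in> Pow S. \<Union>M \<subseteq> T}.
        smult (c T * wt M) (monom 1 (card T - 2 * card M)))"
    using sum.swap_restrict[of "Pow S" "Mt S" "\<lambda>T M. smult (c T * wt M) (monom 1 (card T - 2 * card M))"
        "\<lambda>T M. \<Union>M \<subseteq> T"] fS finMt by simp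
  also have "\<dots> = Q S" unfolding Q_def
  proof (intro sum.cong refl)
    fix M assume M: "M \<in> Mt S"
    have "(\<Sum>T\<in>{T \<in> Pow S. \<Union>M \<subseteq> T}. smult (c T * wt M) (monom 1 (card T - 2 * card M)))
        = smult (wt M) (\<Sum>T\<in>{T \<in> Pow S. \<Union>M \<subseteq> T}. smult (c T) (monom 1 (card T - card (\<Union>M))))"
      using Mt_card_Union[OF M] by (simp add: smult_sum2 mult.commute)
    also have "\<dots> = smult (wt M) (\<Prod>v\<in>S - \<Union>M. X v)"
      using inner_sum[OF fS Mt_Union_sub[OF M]] by (simp add: c_def)
    finally show "(\<Sum>T\<in>{T \<in> Pow S. \<Union>M \<subseteq> T}. smult (c T * wt M) (monom 1 (card T - 2 * card M)))
        = smult (wt M) (\<Prod>v\<in>S - \<Union>M. X v)" .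
  qed
  finally show ?thesis .
qed

lemma wt_insert: "finite M \<Longrightarrow> e \<notin> M \<Longrightarrow> wt (insert e M) = - (cmod (w e))\<^sup>2 * wt M"
  by (simp add: wt_def norm_mult power_mult_distrib)

lemma Q_rec:
  assumes SV: "S \<subseteq> V" and u: "u \<in> S"
  shows "Q S = X u * Q (S - {u}) -
     (\<Sum>t\<in>{t \<in> S - {u}. {u, t} \<in> E}. smult ((cmod (w {u, t}))\<^sup>2) (Q (S - {u} - {t})))"
proof -
  define f where "f M = smult (wt M) (\<Prod>v\<in>S - \<Union>M. X v)" for M
  define A0 where "A0 = {M \<in> Mt S. u \<notin> \<Union>M}"
  define A1 where "A1 = {M \<in> Mt S. u \<in> \<Union>M}"
  define N where "N = {t \<in> S - {u}. {u, t} \<in> E}"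
  have fS: "finite S" using SV finV finite_subset by blast
  have split: "Mt S = A0 \<union> A1" "A0 \<inter> A1 = {}" by (auto simp: A0_def A1_def)
  have fA: "finite A0" "finite A1" using finMt by (auto simp: A0_def A1_def)
  have "Q S = sum f A0 + sum f A1" unfolding Q_def f_def[symmetric] split(1)
    by (rule sum.union_disjoint[OF fA split(2)])
  moreover have "sum f A0 = X u * Q (S - {u})"
  proof -
    have A0: "A0 = Mt (S - {u})" by (auto simp: A0_def Mt_def)
    have "sum f A0 = (\<Sum>M\<in>Mt (S - {u}). X u * smult (wt M) (\<Prod>v\<in>S - {u} - \<Union>M. X v))"
    proof (unfold A0, intro sum.cong refl)
      fix M assume M: "M \<in> Mt (S - {u})"
      have "S - \<Union>M = insert u (S - {u} - \<Union>M)" using M u by (auto simp: Mt_def)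
      then have "(\<Prod>v\<in>S - \<Union>M. X v) = X u * (\<Prod>v\<in>S - {u} - \<Union>M. X v)"
        using fS by simp
      then show "f M = X u * smult (wt M) (\<Prod>v\<in>S - {u} - \<Union>M. X v)"
        by (simp add: f_def mult_smult_right)
    qed
    then show ?thesis by (simp add: Q_def sum_distrib_left)
  qed
  moreover have "sum f A1 = - (\<Sum>t\<in>N. smult ((cmod (w {u, t}))\<^sup>2) (Q (S - {u} - {t})))"
  proof -
    define h where "h = (\<lambda>(t, M'). insert {u, t} M')"
    define Sg where "Sg = (SIGMA t:N. Mt (S - {u} - {t}))"
    have inj: "inj_on h Sg"
    proof (rule inj_onI)
      fix x y assume x: "x \<in> Sg" and y: "y \<in> Sg" and hxy: "h x = h y"
      obtain t M where xt: "x = (t, M)" by (cases x)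
      obtain t' M' where yt: "y = (t', M')" by (cases y)
      have M: "M \<in> Mt (S - {u} - {t})" and M': "M' \<in> Mt (S - {u} - {t'})"
        using x y xt yt by (auto simp: Sg_def)
      have uM: "u \<notin> \<Union>M" "u \<notin> \<Union>M'" using M M' by (auto simp: Mt_def)
      have eq: "insert {u, t} M = insert {u, t'} M'" using hxy xt yt by (simp add: h_def)
      have "{u, t} \<in> insert {u, t'} M'" using eq by blast
      then have "{u, t} = {u, t'}" using uM by auto
      then have tt: "t = t'" by (metis doubleton_eq_iff)
      have "{u, t} \<notin> M" "{u, t} \<notin> M'" using uM by auto
      then have "M = M'" using eq tt by (metis insert_ident)
      then show "x = y" using xt yt tt by simp
    qed
    have img: "h ` Sg = A1"
    proof
      show "h ` Sg \<subseteq> A1"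
      proof
        fix M assume "M \<in> h ` Sg"
        then obtain t M' where tM: "t \<in> N" "M' \<in> Mt (S - {u} - {t})" "M = insert {u, t} M'"
          by (auto simp: h_def Sg_def)
        have "{u, t} \<subseteq> S" using tM(1) u by (auto simp: N_def)
        then show "M \<in> A1" using tM by (auto simp: A1_def Mt_def N_def)
      qed
    next
      show "A1 \<subseteq> h ` Sg"
      proof
        fix M assume M: "M \<in> A1"
        then obtain e where e: "e \<in> M" "u \<in> e" by (auto simp: A1_def)
        have eE: "e \<in> E" "e \<subseteq> S" using M e by (auto simp: A1_def Mt_def)
        obtain a b where ab: "a \<noteq> b" "e = {a, b}" using edge_form[OF eE(1)] by blast
        obtain t where t: "e = {u, t}" "t \<noteq> u" using ab e(2) by auto
        define M' where "M' = M - {e}"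
        have disj: "\<And>f. f \<in> M \<Longrightarrow> f \<noteq> e \<Longrightarrow> f \<inter> e = {}" using M e(1) by (auto simp: A1_def Mt_def)
        have "M' \<in> Mt (S - {u} - {t})"
          using M disj t unfolding M'_def A1_def Mt_def by blast
        moreover have "t \<in> N" using eE t by (auto simp: N_def)
        moreover have "M = insert {u, t} M'" using e(1) t by (auto simp: M'_def)
        ultimately show "M \<in> h ` Sg" unfolding h_def Sg_def by force
      qed
    qed
    have "sum f A1 = sum (f \<circ> h) Sg" using sum.reindex[OF inj, of f] img by simp
    also have "\<dots> = (\<Sum>t\<in>N. \<Sum>M'\<in>Mt (S - {u} - {t}). f (insert {u, t} M'))"
      unfolding Sg_def using fS finMt
      by (subst sum.Sigma) (auto simp: h_def N_def case_prod_beta intro: finite_subset)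
    also have "\<dots> = (\<Sum>t\<in>N. - smult ((cmod (w {u, t}))\<^sup>2) (Q (S - {u} - {t})))"
    proof (intro sum.cong refl)
      fix t assume t: "t \<in> N"
      have "(\<Sum>M'\<in>Mt (S - {u} - {t}). f (insert {u, t} M')) =
          (\<Sum>M'\<in>Mt (S - {u} - {t}). - smult ((cmod (w {u, t}))\<^sup>2)
               (smult (wt M') (\<Prod>v\<in>S - {u} - {t} - \<Union>M'. X v)))"
      proof (intro sum.cong refl)
        fix M' assume M': "M' \<in> Mt (S - {u} - {t})"
        have "{u, t} \<notin> M'" using M' by (auto simp: Mt_def)
        then have "wt (insert {u, t} M') = - (cmod (w {u, t}))\<^sup>2 * wt M'"
          using wt_insert Mt_fin[OF M'] by blast
        moreover have "S - \<Union>(insert {u, t} M') = S - {u} - {t} - \<Union>M'" by auto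
        ultimately show "f (insert {u, t} M') = - smult ((cmod (w {u, t}))\<^sup>2)
               (smult (wt M') (\<Prod>v\<in>S - {u} - {t} - \<Union>M'. X v))"
          by (simp add: f_def)
      qed
      also have "\<dots> = - smult ((cmod (w {u, t}))\<^sup>2) (Q (S - {u} - {t}))"
        by (simp add: Q_def smult_sum2 sum_negf)
      finally show "(\<Sum>M'\<in>Mt (S - {u} - {t}). f (insert {u, t} M')) =
          - smult ((cmod (w {u, t}))\<^sup>2) (Q (S - {u} - {t}))" .
    qed
    finally show ?thesis by (simp add: sum_negf)
  qed
  ultimately show ?thesis by (simp add: N_def)
qed

end


context gr begin

definition nb :: "'a set \<Rightarrow> 'a \<Rightarrow> 'a set" where "nb S u = {t \<in> S - {u}. {u, t} \<in> E}"
definition cw :: "'a \<Rightarrow> 'a \<Rightarrow> real" where "cw u t = (cmod (w {u, t}))\<^sup>2"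

lemma nb_fin: "S \<subseteq> V \<Longrightarrow> finite (nb S u)"
  by (rule finite_subset[OF _ finV]) (auto simp: nb_def)

lemma fin_sub: "S \<subseteq> V \<Longrightarrow> finite S"
  by (rule finite_subset[OF _ finV])

lemma nb_sub: "nb S u \<subseteq> S" by (auto simp: nb_def)

lemma nb_diff: "nb (S - A) u = nb S u - A" by (auto simp: nb_def)

lemma cw_pos: "{u, t} \<in> E \<Longrightarrow> cw u t > 0"
  using ew by (simp add: cw_def edge_weight_def)

lemma P_rec:
  assumes "S \<subseteq> V" "u \<in> S"
  shows "P S = X u * P (S - {u}) - (\<Sum>t\<in>nb S u. smult (cw u t) (P (S - {u} - {t})))"
proof -
  have "P S = Q S" "P (S - {u}) = Q (S - {u})" using assms P_Q[of S] P_Q[of "S - {u}"] by auto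
  moreover have "\<And>t. P (S - {u} - {t}) = Q (S - {u} - {t})" using assms P_Q[of "S - {u} - {_}"] by auto
  ultimately show ?thesis using Q_rec[OF assms] by (simp add: nb_def cw_def)
qed

lemma P_empty: "P {} = 1"
proof -
  have "Mt {} = {{}}"
  proof -
    have "\<And>M. M \<in> Mt {} \<Longrightarrow> M = {}"
    proof -
      fix M assume M: "M \<in> Mt {}"
      show "M = {}"
      proof (rule ccontr)
        assume "M \<noteq> {}"
        then obtain e where "e \<in> M" by blast
        then have "e \<in> E" "e = {}" using M by (auto simp: Mt_def)
        then show False using edge_card by fastforce
      qed
    qed
    moreover have "{} \<in> Mt {}" by (simp add: Mt_def)
    ultimately show ?thesis by blast
  qed
  then have "Q {} = 1" by (simp add: Q_def wt_def)
  then show ?thesis using P_Q by simp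
qed

lemma P_deg: "S \<subseteq> V \<Longrightarrow> degree (P S) \<le> card S \<and> coeff (P S) (card S) = 1"
proof (induct "card S" arbitrary: S rule: less_induct)
  case less
  show ?case
  proof (cases "S = {}")
    case True then show ?thesis by (simp add: P_empty)
  next
    case False
    then obtain u where u: "u \<in> S" by blast
    have fS: "finite S" using less(2) by (rule fin_sub)
    have cS: "card S = Suc (card (S - {u}))" using u fS by (metis card_Suc_Diff1)
    have IH1: "degree (P (S - {u})) \<le> card (S - {u}) \<and> coeff (P (S - {u})) (card (S - {u})) = 1"
      using less(1)[of "S - {u}"] cS less(2) by auto
    have IH2: "\<And>t. t \<in> nb S u \<Longrightarrow> degree (P (S - {u} - {t})) < card (S - {u})"
    proof -
      fix t assume t: "t \<in> nb S u"
      then have tS: "t \<in> S - {u}" by (auto simp: nb_def)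
      then have c2: "card (S - {u}) = Suc (card (S - {u} - {t}))" using fS by (metis card_Suc_Diff1 finite_Diff)
      then show "degree (P (S - {u} - {t})) < card (S - {u})"
        using less(1)[of "S - {u} - {t}"] cS less(2) by fastforce
    qed
    define R where "R = (\<Sum>t\<in>nb S u. smult (cw u t) (P (S - {u} - {t})))"
    define n where "n = card (S - {u})"
    have cR: "\<And>k. n \<le> k \<Longrightarrow> coeff R k = 0" unfolding R_def coeff_sum
    proof (intro sum.neutral ballI)
      fix k t assume k: "n \<le> k" and t: "t \<in> nb S u"
      have "degree (P (S - {u} - {t})) < k" using IH2[OF t] k n_def by simp
      then show "coeff (smult (cw u t) (P (S - {u} - {t}))) k = 0" by (simp add: coeff_eq_0)
    qed
    have c1: "\<And>k. n < k \<Longrightarrow> coeff (P (S - {u})) k = 0"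
      using IH1 coeff_eq_0[of "P (S - {u})"] n_def by (meson le_less_trans)
    have XP: "X u * P (S - {u}) = pCons 0 (P (S - {u})) - smult (w1 u) (P (S - {u}))"
      by (simp add: X_def algebra_simps)
    have e: "P S = pCons 0 (P (S - {u})) - smult (w1 u) (P (S - {u})) - R"
      using P_rec[OF less(2) u] XP R_def by simp
    have ck: "\<And>k. Suc n < k \<Longrightarrow> coeff (P S) k = 0"
    proof -
      fix k assume k: "Suc n < k"
      then obtain k' where "k = Suc k'" "n < k'" by (cases k) auto
      then show "coeff (P S) k = 0" unfolding e using c1 cR by simp
    qed
    have "degree (P S) \<le> card S" using ck cS n_def by (intro degree_le) auto
    moreover have "coeff (P S) (card S) = 1"
      unfolding e cS n_def[symmetric] using IH1 c1 cR n_def by simp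
    ultimately show ?thesis by simp
  qed
qed

lemma P_nz: "S \<subseteq> V \<Longrightarrow> P S \<noteq> 0"
  using P_deg[of S] by auto

lemma pderiv_X: "pderiv (X u) = 1" by (simp add: X_def pderiv_pCons)

lemma pderiv_sum: "pderiv (\<Sum>i\<in>A. f i) = (\<Sum>i\<in>A. pderiv (f i))"
  by (induct A rule: infinite_finite_induct) (simp_all add: pderiv_add)

lemma P_der: "S \<subseteq> V \<Longrightarrow> pderiv (P S) = (\<Sum>v\<in>S. P (S - {v}))"
proof (induct "card S" arbitrary: S rule: less_induct)
  case less
  show ?case
  proof (cases "S = {}")
    case True then show ?thesis by (simp add: P_empty pderiv_pCons)
  next
    case False
    then obtain u where u: "u \<in> S" by blast
    have fS: "finite S" using less(2) by (rule fin_sub)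
    have IH: "\<And>T. T \<subseteq> S \<Longrightarrow> u \<notin> T \<Longrightarrow> pderiv (P T) = (\<Sum>v\<in>T. P (T - {v}))"
    proof -
      fix T assume T: "T \<subseteq> S" "u \<notin> T"
      then have "card T < card S" using u fS by (metis psubsetI psubset_card_mono)
      then show "pderiv (P T) = (\<Sum>v\<in>T. P (T - {v}))" using less T by blast
    qed
    define N where "N = nb S u"
    have fN: "finite N" using nb_fin less(2) N_def by blast
    have "pderiv (P S) = P (S - {u}) + X u * pderiv (P (S - {u})) -
        (\<Sum>t\<in>N. smult (cw u t) (pderiv (P (S - {u} - {t}))))"
      using P_rec[OF less(2) u] by (simp add: pderiv_mult pderiv_X pderiv_sum pderiv_smult pderiv_diff N_def)
    also have "\<dots> = P (S - {u}) + X u * (\<Sum>v\<in>S - {u}. P (S - {u} - {v})) -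
        (\<Sum>t\<in>N. smult (cw u t) (\<Sum>v\<in>S - {u} - {t}. P (S - {u} - {t} - {v})))"
    proof -
      have "\<And>t. pderiv (P (S - {u} - {t})) = (\<Sum>v\<in>S - {u} - {t}. P (S - {u} - {t} - {v}))"
        by (rule IH) auto
      moreover have "pderiv (P (S - {u})) = (\<Sum>v\<in>S - {u}. P (S - {u} - {v}))" by (rule IH) auto
      ultimately show ?thesis by simp
    qed
    also have "\<dots> = (\<Sum>v\<in>S. P (S - {v}))"
    proof -
      have A: "(\<Sum>v\<in>S. P (S - {v})) = P (S - {u}) + (\<Sum>v\<in>S - {u}. P (S - {v}))"
        using u fS by (simp add: sum.remove)
      have B: "\<And>v. v \<in> S - {u} \<Longrightarrow> P (S - {v}) = X u * P (S - {u} - {v}) -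
          (\<Sum>t\<in>{t \<in> N. t \<noteq> v}. smult (cw u t) (P (S - {u} - {t} - {v})))"
      proof -
        fix v assume v: "v \<in> S - {u}"
        have "P (S - {v}) = X u * P (S - {v} - {u}) -
            (\<Sum>t\<in>nb (S - {v}) u. smult (cw u t) (P (S - {v} - {u} - {t})))"
          using P_rec[of "S - {v}" u] less(2) u v by auto
        moreover have "nb (S - {v}) u = {t \<in> N. t \<noteq> v}" by (auto simp: N_def nb_def)
        moreover have "S - {v} - {u} = S - {u} - {v}" by auto
        moreover have "\<And>t. S - {v} - {u} - {t} = S - {u} - {t} - {v}" by auto
        ultimately show "P (S - {v}) = X u * P (S - {u} - {v}) -
          (\<Sum>t\<in>{t \<in> N. t \<noteq> v}. smult (cw u t) (P (S - {u} - {t} - {v})))" by simp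
      qed
      have C: "(\<Sum>v\<in>S - {u}. \<Sum>t\<in>{t \<in> N. t \<noteq> v}. smult (cw u t) (P (S - {u} - {t} - {v}))) =
          (\<Sum>t\<in>N. \<Sum>v\<in>{v \<in> S - {u}. t \<noteq> v}. smult (cw u t) (P (S - {u} - {t} - {v})))"
        using sum.swap_restrict[of "S - {u}" N "\<lambda>v t. smult (cw u t) (P (S - {u} - {t} - {v}))"
            "\<lambda>v t. t \<noteq> v"] fS fN by simp
      have D: "\<And>t. {v \<in> S - {u}. t \<noteq> v} = S - {u} - {t}" by auto
      show ?thesis unfolding A
        using B C D by (simp add: sum_subtractf sum_distrib_left smult_sum2)
    qed
    finally show ?thesis .
  qed
qed

definition Dl :: "'a set \<Rightarrow> 'a \<Rightarrow> 'a \<Rightarrow> real poly" where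
  "Dl S u v = P (S - {u}) * P (S - {v}) - P S * P (S - {u} - {v})"

lemma Dl_rec:
  assumes "S \<subseteq> V" "u \<in> S" "v \<in> S" "u \<noteq> v"
  shows "Dl S u v = (\<Sum>t\<in>nb S u - {v}. smult (cw u t) (Dl (S - {u}) t v)) +
     (if {u, v} \<in> E then smult (cw u v) (P (S - {u} - {v}) * P (S - {u} - {v})) else 0)"
proof -
  define N where "N = nb S u"
  have fN: "finite N" using nb_fin assms N_def by blast
  have r1: "P S = X u * P (S - {u}) - (\<Sum>t\<in>N. smult (cw u t) (P (S - {u} - {t})))"
    using P_rec assms N_def by blast
  have r2: "P (S - {v}) = X u * P (S - {u} - {v}) -
      (\<Sum>t\<in>N - {v}. smult (cw u t) (P (S - {u} - {t} - {v})))"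
  proof -
    have "P (S - {v}) = X u * P (S - {v} - {u}) -
            (\<Sum>t\<in>nb (S - {v}) u. smult (cw u t) (P (S - {v} - {u} - {t})))"
      using P_rec[of "S - {v}" u] assms by auto
    moreover have "nb (S - {v}) u = N - {v}" by (auto simp: N_def nb_def)
    moreover have "S - {v} - {u} = S - {u} - {v}" by auto
    moreover have "\<And>t. S - {v} - {u} - {t} = S - {u} - {t} - {v}" by auto
    ultimately show ?thesis by simp
  qed
  have sp: "(\<Sum>t\<in>N. smult (cw u t) (P (S - {u} - {t}))) =
      (\<Sum>t\<in>N - {v}. smult (cw u t) (P (S - {u} - {t}))) +
      (if {u, v} \<in> E then smult (cw u v) (P (S - {u} - {v})) else 0)"
  proof (cases "v \<in> N")
    case True
    then have "{u, v} \<in> E" by (auto simp: N_def nb_def)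
    then show ?thesis using True fN by (simp add: sum.remove add.commute)
  next
    case False
    then have "{u, v} \<notin> E" using assms by (auto simp: N_def nb_def)
    then show ?thesis using False by simp
  qed
  have "Dl S u v = (\<Sum>t\<in>N - {v}. smult (cw u t)
      (P (S - {u} - {t}) * P (S - {u} - {v}) - P (S - {u}) * P (S - {u} - {t} - {v}))) +
     (if {u, v} \<in> E then smult (cw u v) (P (S - {u} - {v}) * P (S - {u} - {v})) else 0)"
    unfolding Dl_def r1 r2 sp
    by (simp add: algebra_simps sum_distrib_left sum_distrib_right sum_subtractf mult_smult_left
        mult_smult_right smult_sum2 smult_diff_right)
  also have "\<dots> = (\<Sum>t\<in>N - {v}. smult (cw u t) (Dl (S - {u}) t v)) +
     (if {u, v} \<in> E then smult (cw u v) (P (S - {u} - {v}) * P (S - {u} - {v})) else 0)"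
  proof -
    have "\<And>t. Dl (S - {u}) t v = P (S - {u} - {t}) * P (S - {u} - {v}) - P (S - {u}) * P (S - {u} - {t} - {v})"
      by (simp add: Dl_def)
    then show ?thesis by simp
  qed
  finally show ?thesis using N_def by simp
qed

end


context gr begin

lemma good_Dl: "S \<subseteq> V \<Longrightarrow> u \<in> S \<Longrightarrow> v \<in> S \<Longrightarrow> u \<noteq> v \<Longrightarrow> good th (Dl S u v)"
proof (induct "card S" arbitrary: S u v rule: less_induct)
  case less
  have fS: "finite S" using less(2) by (rule fin_sub)
  have cs: "card (S - {u}) < card S" using fS less(3) by (meson card_Diff1_less)
  have "good th (\<Sum>t\<in>nb S u - {v}. smult (cw u t) (Dl (S - {u}) t v))"
  proof (rule good_sum)
    show "finite (nb S u - {v})" using nb_fin less(2) by blast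
  next
    fix t assume t: "t \<in> nb S u - {v}"
    then have "t \<in> S - {u}" "t \<noteq> v" by (auto simp: nb_def)
    then have "good th (Dl (S - {u}) t v)" using less(1)[OF cs, of t v] less(2-5) by auto
    moreover have "cw u t \<ge> 0" by (simp add: cw_def)
    ultimately show "good th (smult (cw u t) (Dl (S - {u}) t v))" by (rule good_smult[rotated])
  qed
  moreover have "good th (if {u, v} \<in> E then smult (cw u v) (P (S - {u} - {v}) * P (S - {u} - {v})) else 0)"
    by (auto intro: good_smult good_sq simp: cw_def)
  ultimately show ?case using Dl_rec[OF less(2-5)] by (simp add: good_add)
qed

lemma Dl_edge:
  assumes "S \<subseteq> V" "u \<in> S" "v \<in> S" "u \<noteq> v" "{u, v} \<in> E"
  shows "\<not> van th (Dl S u v) (2 * order th (P (S - {u} - {v})) + 1)"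
proof -
  define R where "R = (\<Sum>t\<in>nb S u - {v}. smult (cw u t) (Dl (S - {u}) t v))"
  have gR: "good th R" unfolding R_def
  proof (rule good_sum)
    show "finite (nb S u - {v})" using nb_fin assms by blast
  next
    fix t assume t: "t \<in> nb S u - {v}"
    then have "t \<in> S - {u}" "t \<noteq> v" by (auto simp: nb_def)
    then have "good th (Dl (S - {u}) t v)" using assms by (intro good_Dl) auto
    then show "good th (smult (cw u t) (Dl (S - {u}) t v))" by (rule good_smult[rotated]) (simp add: cw_def)
  qed
  have "P (S - {u} - {v}) \<noteq> 0" using assms by (intro P_nz) auto
  then show ?thesis using good_nonvan[OF gR _ cw_pos[OF assms(5)]] Dl_rec[OF assms(1-4)] assms(5) R_def
    by simp
qed

definition Wp :: "'a set \<Rightarrow> 'a \<Rightarrow> real poly" where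
  "Wp S u = P (S - {u}) * pderiv (P S) - P S * pderiv (P (S - {u}))"

lemma W_eq:
  assumes "S \<subseteq> V" "u \<in> S"
  shows "Wp S u = P (S - {u}) * P (S - {u}) + (\<Sum>v\<in>S - {u}. Dl S u v)"
proof -
  have fS: "finite S" using assms(1) by (rule fin_sub)
  have d1: "pderiv (P S) = P (S - {u}) + (\<Sum>v\<in>S - {u}. P (S - {v}))"
    using P_der[OF assms(1)] assms(2) fS by (simp add: sum.remove)
  have d2: "pderiv (P (S - {u})) = (\<Sum>v\<in>S - {u}. P (S - {u} - {v}))"
    using P_der[of "S - {u}"] assms by auto
  show ?thesis unfolding Wp_def d1 d2 Dl_def
    by (simp add: algebra_simps sum_distrib_left sum_subtractf)
qed

lemma good_W_rest:
  assumes "S \<subseteq> V" "u \<in> S"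
  shows "good th (\<Sum>v\<in>S - {u}. Dl S u v)"
  using assms fin_sub[OF assms(1)] by (intro good_sum good_Dl) auto

lemma P_split:
  "T \<subseteq> S \<Longrightarrow> S \<subseteq> V \<Longrightarrow> (\<forall>x\<in>T. \<forall>y\<in>S - T. {x, y} \<notin> E) \<Longrightarrow> P S = P T * P (S - T)"
proof (induct "card T" arbitrary: S T rule: less_induct)
  case less
  show ?case
  proof (cases "T = {}")
    case True then show ?thesis by (simp add: P_empty)
  next
    case False
    then obtain u where u: "u \<in> T" by blast
    have fT: "finite T" using less(2,3) fin_sub by blast
    have cT: "\<And>A. u \<in> A \<Longrightarrow> card (T - A) < card T" using fT u
      by (metis Diff_iff card_mono finite_Diff Diff_subset psubsetI psubset_card_mono subset_antisym)
    have uS: "u \<in> S" using u less(2) by auto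
    have nbe: "nb S u = nb T u" using less(4) u less(2) by (auto simp: nb_def)
    have IH1: "P (S - {u}) = P (T - {u}) * P (S - T)"
    proof -
      have "P (S - {u}) = P (T - {u}) * P (S - {u} - (T - {u}))"
        using less(1)[OF cT[of "{u}"], of "S - {u}"] less(2-4) by auto
      moreover have "S - {u} - (T - {u}) = S - T" using u by auto
      ultimately show ?thesis by simp
    qed
    have IH2: "\<And>t. t \<in> nb T u \<Longrightarrow> P (S - {u} - {t}) = P (T - {u} - {t}) * P (S - T)"
    proof -
      fix t assume t: "t \<in> nb T u"
      then have tT: "t \<in> T" by (auto simp: nb_def)
      have "T - {u} - {t} = T - {u, t}" by auto
      then have c: "card (T - {u} - {t}) < card T" using cT[of "{u,t}"] by simp
      have "P (S - {u} - {t}) = P (T - {u} - {t}) * P (S - {u} - {t} - (T - {u} - {t}))"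
        using less(1)[OF c, of "S - {u} - {t}"] less(2-4) by auto
      moreover have "S - {u} - {t} - (T - {u} - {t}) = S - T" using u tT by auto
      ultimately show "P (S - {u} - {t}) = P (T - {u} - {t}) * P (S - T)" by simp
    qed
    have "P S = X u * (P (T - {u}) * P (S - T)) -
        (\<Sum>t\<in>nb T u. smult (cw u t) (P (T - {u} - {t}) * P (S - T)))"
      using P_rec[OF less(3) uS] nbe IH1 IH2 by simp
    also have "\<dots> = (X u * P (T - {u}) - (\<Sum>t\<in>nb T u. smult (cw u t) (P (T - {u} - {t})))) * P (S - T)"
      by (simp add: algebra_simps sum_distrib_right sum_distrib_left mult_smult_right)
    also have "\<dots> = P T * P (S - T)" using P_rec[of T u] less(2,3) u by auto
    finally show ?thesis .
  qed
qed

definition m :: "'a set \<Rightarrow> nat" where "m S = order th (P S)"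

lemma mP: "S \<subseteq> V \<Longrightarrow> van th (P S) (m S) \<and> tc th (P S) (m S) \<noteq> 0"
  using van_order P_nz m_def by metis

lemma m_le: "S \<subseteq> V \<Longrightarrow> van th (P S) n \<Longrightarrow> n \<le> m S"
  using van_le P_nz m_def by metis

lemma m_split:
  "T \<subseteq> S \<Longrightarrow> S \<subseteq> V \<Longrightarrow> (\<forall>x\<in>T. \<forall>y\<in>S - T. {x, y} \<notin> E) \<Longrightarrow> m S = m T + m (S - T)"
  using P_split[of T S] P_nz[of S] unfolding m_def by (simp add: order_mult)

lemma il1:
  assumes "S \<subseteq> V" "u \<in> S"
  shows "m S \<le> m (S - {u}) + 1"
proof (rule ccontr)
  assume c: "\<not> m S \<le> m (S - {u}) + 1"
  define k where "k = m S"
  define a where "a = m (S - {u})"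
  have SU: "S - {u} \<subseteq> V" using assms by auto
  have vf: "van th (P S) k" "tc th (P S) k \<noteq> 0" using mP[OF assms(1)] k_def by auto
  have vg: "van th (P (S - {u})) a" "tc th (P (S - {u})) a \<noteq> 0" using mP[OF SU] a_def by auto
  have ak: "a \<noteq> k" using c a_def k_def by simp
  have W: "van th (Wp S u) (a + k - 1)" using W_low[OF vf(1) vg(1) ak] by (simp add: Wp_def)
  have "van th (P (S - {u}) * P (S - {u})) (a + k - 1)"
    using good_van_split[OF good_sq good_W_rest[OF assms]] W W_eq[OF assms] by auto
  moreover have "a + a < a + k - 1" using c a_def k_def by simp
  ultimately have "tc th (P (S - {u}) * P (S - {u})) (a + a) = 0" by (simp add: van_def)
  then show False using tc_mult[OF vg(1) vg(1)] vg(2) by simp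
qed

lemma ess_sign:
  assumes "S \<subseteq> V" "u \<in> S" "m (S - {u}) + 1 = m S"
  shows "tc th (P S) (m S) * tc th (P (S - {u})) (m (S - {u})) > 0"
proof -
  define k where "k = m S"
  define a where "a = m (S - {u})"
  have SU: "S - {u} \<subseteq> V" using assms by auto
  have vf: "van th (P S) k" "tc th (P S) k \<noteq> 0" using mP[OF assms(1)] k_def by auto
  have vg: "van th (P (S - {u})) a" "tc th (P (S - {u})) a \<noteq> 0" using mP[OF SU] a_def by auto
  have ak: "a \<noteq> k" using assms(3) a_def k_def by simp
  have W: "van th (Wp S u) (a + k - 1)" "tc th (Wp S u) (a + k - 1) = (real k - real a) * tc th (P S) k * tc th (P (S - {u})) a"
    using W_low[OF vf(1) vg(1) ak] by (simp_all add: Wp_def)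
  have gW: "good th (Wp S u)" using W_eq[OF assms(1,2)] good_add[OF good_sq good_W_rest[OF assms(1,2)]] by simp
  have "real k - real a = 1" using assms(3) a_def k_def by simp
  then have "tc th (Wp S u) (a + k - 1) \<noteq> 0" using W(2) vf vg by simp
  moreover have "tc th (Wp S u) (a + k - 1) \<ge> 0" using gW W(1) by (simp add: good_def)
  ultimately show ?thesis using W(2) \<open>real k - real a = 1\<close> k_def a_def by (simp add: less_le)
qed

lemma il2:
  assumes "S \<subseteq> V" "u \<in> S"
  shows "m (S - {u}) \<le> m S + 1"
proof -
  define a where "a = m (S - {u})"
  have SU: "S - {u} \<subseteq> V" using assms by auto
  have va: "van th (P (S - {u})) (a - 1)" using mP[OF SU] a_def van_mono by (metis diff_le_self)
  have "van th (X u * P (S - {u})) (0 + (a - 1))" using van_mult[OF van_0 va] by simp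
  moreover have "van th (\<Sum>t\<in>nb S u. smult (cw u t) (P (S - {u} - {t}))) (a - 1)"
  proof (rule van_sum)
    fix t assume t: "t \<in> nb S u"
    then have "t \<in> S - {u}" by (auto simp: nb_def)
    then have "m (S - {u}) \<le> m (S - {u} - {t}) + 1" using il1[OF SU] by blast
    then have "a - 1 \<le> m (S - {u} - {t})" using a_def by simp
    then have "van th (P (S - {u} - {t})) (a - 1)" using mP[of "S - {u} - {t}"] assms van_mono by blast
    then show "van th (smult (cw u t) (P (S - {u} - {t}))) (a - 1)" by (rule van_smult)
  qed
  ultimately have "van th (P S) (a - 1)" using P_rec[OF assms] by (simp add: van_diff)
  then have "a - 1 \<le> m S" using m_le assms by blast
  then show ?thesis using a_def by simp
qed

end


context gr begin

lemma il1': "S \<subseteq> V \<Longrightarrow> u \<in> S \<Longrightarrow> m S \<le> m (S - {u}) + 1" by (rule il1)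
lemma il2': "S \<subseteq> V \<Longrightarrow> u \<in> S \<Longrightarrow> m (S - {u}) \<le> m S + 1" by (rule il2)

lemma Diff_comm2: "S - {v} - {u} = S - {u} - {v}" by auto

lemma il_pair:
  assumes "S \<subseteq> V" "u \<in> S" "v \<in> S" "u \<noteq> v"
  shows "m (S - {u}) \<le> m (S - {u} - {v}) + 1" "m (S - {u} - {v}) \<le> m (S - {u}) + 1"
        "m (S - {v}) \<le> m (S - {u} - {v}) + 1" "m (S - {u} - {v}) \<le> m (S - {v}) + 1"
        "m S \<le> m (S - {u}) + 1" "m (S - {u}) \<le> m S + 1"
        "m S \<le> m (S - {v}) + 1" "m (S - {v}) \<le> m S + 1"
proof -
  have a: "S - {u} \<subseteq> V" "v \<in> S - {u}" "S - {v} \<subseteq> V" "u \<in> S - {v}" using assms by auto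
  show "m (S - {u}) \<le> m (S - {u} - {v}) + 1" using il1[OF a(1,2)] .
  show "m (S - {u} - {v}) \<le> m (S - {u}) + 1" using il2[OF a(1,2)] .
  show "m (S - {v}) \<le> m (S - {u} - {v}) + 1" using il1[OF a(3,4)] by (simp add: Diff_comm2)
  show "m (S - {u} - {v}) \<le> m (S - {v}) + 1" using il2[OF a(3,4)] by (simp add: Diff_comm2)
  show "m S \<le> m (S - {u}) + 1" using il1 assms by blast
  show "m (S - {u}) \<le> m S + 1" using il2 assms by blast
  show "m S \<le> m (S - {v}) + 1" using il1 assms by blast
  show "m (S - {v}) \<le> m S + 1" using il2 assms by blast
qed

lemma Dl_facts:
  assumes "S \<subseteq> V" "u \<in> S" "v \<in> S" "u \<noteq> v"
  defines "n \<equiv> min (m (S - {u}) + m (S - {v})) (m S + m (S - {u} - {v}))"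
  shows "van th (Dl S u v) n"
    and "m (S - {u}) + m (S - {v}) \<noteq> m S + m (S - {u} - {v}) \<Longrightarrow> tc th (Dl S u v) n \<noteq> 0"
proof -
  have V: "S - {u} \<subseteq> V" "S - {v} \<subseteq> V" "S - {u} - {v} \<subseteq> V" using assms by auto
  define A where "A = P (S - {u}) * P (S - {v})"
  define B where "B = P S * P (S - {u} - {v})"
  have vA: "van th A (m (S - {u}) + m (S - {v}))"
    and tA: "tc th A (m (S - {u}) + m (S - {v})) \<noteq> 0"
    using van_mult tc_mult mP[OF V(1)] mP[OF V(2)] A_def by auto
  have vB: "van th B (m S + m (S - {u} - {v}))"
    and tB: "tc th B (m S + m (S - {u} - {v})) \<noteq> 0"
    using van_mult tc_mult mP[OF V(3)] mP[OF assms(1)] B_def by auto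
  have DAB: "Dl S u v = A - B" by (simp add: Dl_def A_def B_def)
  have n1: "n \<le> m (S - {u}) + m (S - {v})" "n \<le> m S + m (S - {u} - {v})" unfolding n_def by auto
  show "van th (Dl S u v) n" unfolding DAB
    by (rule van_diff[OF van_mono[OF vA n1(1)] van_mono[OF vB n1(2)]])
  assume ne: "m (S - {u}) + m (S - {v}) \<noteq> m S + m (S - {u} - {v})"
  show "tc th (Dl S u v) n \<noteq> 0"
  proof (cases "m (S - {u}) + m (S - {v}) < m S + m (S - {u} - {v})")
    case True
    then have "tc th B (m (S - {u}) + m (S - {v})) = 0" using vB by (simp add: van_def)
    then show ?thesis using tA True unfolding DAB n_def by simp
  next
    case False
    then have "m S + m (S - {u} - {v}) < m (S - {u}) + m (S - {v})" using ne by simp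
    then have "tc th A (m S + m (S - {u} - {v})) = 0" using vA by (simp add: van_def)
    then show ?thesis using tB False unfolding DAB n_def by simp
  qed
qed

lemma Dl_parity:
  assumes "S \<subseteq> V" "u \<in> S" "v \<in> S" "u \<noteq> v"
    "m (S - {u}) + m (S - {v}) \<noteq> m S + m (S - {u} - {v})"
  shows "even (min (m (S - {u}) + m (S - {v})) (m S + m (S - {u} - {v})))"
proof -
  let ?n = "min (m (S - {u}) + m (S - {v})) (m S + m (S - {u} - {v}))"
  have "van th (Dl S u v) ?n \<longrightarrow> 0 \<le> tc th (Dl S u v) ?n \<and> (tc th (Dl S u v) ?n \<noteq> 0 \<longrightarrow> even ?n)"
    using good_Dl[OF assms(1-4)] unfolding good_def by (rule spec)
  moreover have "van th (Dl S u v) ?n" by (rule Dl_facts(1)[OF assms(1-4)])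
  moreover have "tc th (Dl S u v) ?n \<noteq> 0" by (rule Dl_facts(2)[OF assms(1-4) assms(5)])
  ultimately show ?thesis by blast
qed

lemma Dl_edge_le:
  assumes "S \<subseteq> V" "u \<in> S" "v \<in> S" "u \<noteq> v" "{u, v} \<in> E"
  shows "min (m (S - {u}) + m (S - {v})) (m S + m (S - {u} - {v})) \<le> 2 * m (S - {u} - {v})"
proof (rule ccontr)
  assume "\<not> ?thesis"
  then have le: "2 * m (S - {u} - {v}) + 1 \<le> min (m (S - {u}) + m (S - {v})) (m S + m (S - {u} - {v}))"
    by linarith
  have "van th (Dl S u v) (2 * m (S - {u} - {v}) + 1)"
    by (rule van_mono[OF Dl_facts(1)[OF assms(1-4)] le])
  then show False using Dl_edge[OF assms] by (simp add: m_def)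
qed

lemma G1:
  assumes "S \<subseteq> V" "u \<in> S" "v \<in> S" "u \<noteq> v"
    "m (S - {v}) + 1 = m S" "m (S - {u}) + 1 \<noteq> m S"
  shows "m (S - {u} - {v}) + 1 = m (S - {u})"
proof -
  note i = il_pair[OF assms(1-4)]
  show ?thesis
  proof (cases "m (S - {u}) = m S")
    case True
    show ?thesis
    proof (rule ccontr)
      assume "\<not> ?thesis"
      then have c: "m (S - {u} - {v}) = m S" using i True assms(5) by arith
      have "even (min (m (S - {u}) + m (S - {v})) (m S + m (S - {u} - {v})))"
        using c True assms(5) by (intro Dl_parity[OF assms(1-4)]) simp
      moreover have "min (m (S - {u}) + m (S - {v})) (m S + m (S - {u} - {v})) = 2 * m (S - {v}) + 1"
        using c True assms(5) by simp
      ultimately show False by simp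
    qed
  next
    case False
    then show ?thesis using i assms(5,6) by arith
  qed
qed

lemma adj_EN:
  assumes "S \<subseteq> V" "u \<in> S" "v \<in> S" "u \<noteq> v" "{u, v} \<in> E"
    "m (S - {u}) + 1 = m S" "m (S - {v}) = m S"
  shows False
proof -
  have "m (S - {v} - {u}) + 1 = m (S - {v})"
    using G1[of S v u] assms by simp
  then have c: "m (S - {u} - {v}) + 1 = m S" using assms(7) by (simp add: Diff_comm2)
  show False using Dl_edge_le[OF assms(1-5)] c assms(6,7) by simp
qed

lemma adj_EE:
  assumes "S \<subseteq> V" "u \<in> S" "v \<in> S" "u \<noteq> v" "{u, v} \<in> E"
    "m (S - {u}) + 1 = m S" "m (S - {v}) + 1 = m S"
  shows "m (S - {u} - {v}) + 1 \<noteq> m (S - {u})"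
  using Dl_edge_le[OF assms(1-5)] assms(6,7) by simp

lemma special_pos:
  assumes "S \<subseteq> V" "u \<in> S" "a \<in> S" "u \<noteq> a" "{u, a} \<in> E"
    "m (S - {u}) + 1 = m S" "m (S - {a}) + 1 \<noteq> m S"
  shows "m (S - {a}) = m S + 1"
proof -
  note i = il_pair[OF assms(1-4)]
  have "m (S - {a}) \<noteq> m S" using adj_EN[OF assms(1-6)] by blast
  then show ?thesis using i assms(7) by arith
qed

lemma PP:
  assumes "S \<subseteq> V" "u \<in> S" "v \<in> S" "u \<noteq> v"
    "m (S - {u}) = m S + 1" "m (S - {v}) = m S + 1"
  shows "m (S - {u} - {v}) \<noteq> m S + 1"
proof
  assume c: "m (S - {u} - {v}) = m S + 1"
  have "even (min (m (S - {u}) + m (S - {v})) (m S + m (S - {u} - {v})))"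
    using c assms(5,6) by (intro Dl_parity[OF assms(1-4)]) simp
  moreover have "min (m (S - {u}) + m (S - {v})) (m S + m (S - {u} - {v})) = 2 * m S + 1"
    using c assms(5,6) by simp
  ultimately show False by simp
qed

lemma ess_exists:
  assumes "S \<subseteq> V" "m S \<ge> 1"
  shows "\<exists>v\<in>S. m (S - {v}) + 1 = m S"
proof (rule ccontr)
  assume nt: "\<not> ?thesis"
  have h: "m S \<le> m (S - {v})" if v: "v \<in> S" for v
  proof -
    have "m S \<le> m (S - {v}) + 1" by (rule il1[OF assms(1) v])
    moreover have "m (S - {v}) + 1 \<noteq> m S" using nt v by blast
    ultimately show ?thesis by linarith
  qed
  have "van th (\<Sum>v\<in>S. P (S - {v})) (m S)"
  proof (rule van_sum)
    fix v assume v: "v \<in> S"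
    have "S - {v} \<subseteq> V" using assms(1) by auto
    then have "van th (P (S - {v})) (m (S - {v}))" using mP by blast
    then show "van th (P (S - {v})) (m S)" using h[OF v] van_mono by blast
  qed
  then have "van th (pderiv (P S)) (m S)" using P_der[OF assms(1)] by simp
  moreover have "m S - 1 < m S" using assms(2) by simp
  ultimately have "tc th (pderiv (P S)) (m S - 1) = 0" by (simp add: van_def)
  then show False using tc_pderiv[of th "P S" "m S - 1"] assms mP[OF assms(1)] by simp
qed

lemma il_set:
  assumes "S \<subseteq> V" "finite F"
  shows "m (S - F) \<le> m S + card (F \<inter> S) \<and> m S \<le> m (S - F) + card (F \<inter> S)"
  using assms(2)
proof (induct F rule: finite_induct)
  case empty then show ?case by simp
next
  case (insert x F)
  show ?case
  proof (cases "x \<in> S")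
    case True
    have xs: "x \<in> S - F" using True insert(2) by simp
    have eq: "S - insert x F = S - F - {x}" by auto
    have c: "card (insert x F \<inter> S) = card (F \<inter> S) + 1"
      using insert True by (simp add: Int_insert_left)
    have "S - F \<subseteq> V" using assms(1) by auto
    then show ?thesis using il1[OF _ xs] il2[OF _ xs] insert(3) eq c by fastforce
  next
    case False
    then have "S - insert x F = S - F" "insert x F \<inter> S = F \<inter> S" by auto
    then show ?thesis using insert(3) by simp
  qed
qed

end


context gr begin

definition closed :: "'a set \<Rightarrow> 'a set \<Rightarrow> bool" where
  "closed T K \<longleftrightarrow> (\<forall>x\<in>K. \<forall>y\<in>T - K. {x, y} \<notin> E)"

lemma m_closed: "K \<subseteq> T \<Longrightarrow> T \<subseteq> V \<Longrightarrow> closed T K \<Longrightarrow> m T = m K + m (T - K)"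
proof (rule m_split)
  assume "K \<subseteq> T" "T \<subseteq> V" "closed T K"
  then show "\<forall>x\<in>K. \<forall>y\<in>T - K. {x, y} \<notin> E" by (auto simp: closed_def)
qed

lemma closed_diff: "closed T K \<Longrightarrow> closed (T - Y) (K - Y)"
  by (auto simp: closed_def)

lemma closed_compl: "closed T K \<Longrightarrow> closed T (T - K)"
  unfolding closed_def by (metis DiffD1 DiffD2 DiffI insert_commute)

definition Ex :: "'a set \<Rightarrow> 'a set \<Rightarrow> bool" where
  "Ex S Z \<longleftrightarrow> (\<exists>f. inj_on f Z \<and> (\<forall>z\<in>Z. f z \<in> S - Z \<and> {z, f z} \<in> E) \<and>
      m (S - Z - f ` Z) + card Z = m (S - Z))"

definition lc :: "'a set \<Rightarrow> real" where "lc T = tc th (P T) (m T)"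

lemma lc_nz: "T \<subseteq> V \<Longrightarrow> lc T \<noteq> 0" using mP by (simp add: lc_def)

lemma sign_trans:
  fixes s a b c :: real
  assumes "s * a * c > 0" "b * c > 0"
  shows "s * a * b > 0"
proof -
  have "(s * a * c) * (b * c) > 0" using assms by simp
  then have "(s * a * b) * (c * c) > 0" by (simp add: algebra_simps)
  moreover have "c * c > 0" using assms(2) by (metis mult_eq_0_iff not_real_square_gt_zero)
  ultimately show ?thesis by (simp add: zero_less_mult_iff)
qed

lemma BE:
  assumes "finite Z" "Z \<subseteq> S" "S \<subseteq> V" "n + card Z = m (S - Z)"
  shows "van th (P S) n \<and> (tc th (P S) n \<noteq> 0 \<longleftrightarrow> Ex S Z) \<and>
         (Ex S Z \<longrightarrow> (-1) ^ card Z * tc th (P S) n * lc (S - Z) > 0)"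
  using assms
proof (induct "card Z" arbitrary: Z S n rule: less_induct)
  case less
  show ?case
  proof (cases "Z = {}")
    case True
    then have n: "n = m S" using less by simp
    have "Ex S {}" by (simp add: Ex_def)
    moreover have "lc S * lc S > 0" using lc_nz[OF less(4)] not_real_square_gt_zero by blast
    ultimately show ?thesis using True n mP[OF less(4)] by (simp add: lc_def)
  next
    case False
    then obtain z where z: "z \<in> Z" by blast
    define Z' where "Z' = Z - {z}"
    have fZ': "finite Z'" using less(2) Z'_def by simp
    have cZ: "card Z = Suc (card Z')" using less(2) z Z'_def by (metis card_Suc_Diff1)
    have zS: "z \<in> S" using z less(3) by auto
    have SZ: "S - Z = S - {z} - Z'" using z Z'_def by auto
    have SZV: "S - Z \<subseteq> V" using less(4) by auto
    define N where "N = nb S z"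
    have fN: "finite N" using nb_fin less(4) N_def by blast
    define Good where "Good = {t \<in> N. t \<notin> Z' \<and> m (S - Z - {t}) + 1 = m (S - Z) \<and> Ex (S - {z} - {t}) Z'}"
    have v1: "van th (P (S - {z})) (Suc n)"
    proof -
      have "card Z' < card Z" using cZ by simp
      moreover have "Z' \<subseteq> S - {z}" using less(3) Z'_def by auto
      moreover have "Suc n + card Z' = m (S - {z} - Z')" using less(5) cZ SZ by simp
      ultimately show ?thesis using less(1)[of Z' "S - {z}" "Suc n"] fZ' less(4) by auto
    qed
    have vX: "van th (X z * P (S - {z})) (Suc n)" using van_mult[OF van_0 v1] by simp
    have nbt: "van th (P (S - {z} - {t})) n \<and>
        (t \<notin> Good \<longrightarrow> tc th (P (S - {z} - {t})) n = 0) \<and>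
        (t \<in> Good \<longrightarrow> tc th (P (S - {z} - {t})) n \<noteq> 0 \<and>
           (-1) ^ card Z' * tc th (P (S - {z} - {t})) n * lc (S - Z - {t}) > 0)" if t: "t \<in> N" for t
    proof -
      have tS: "t \<in> S - {z}" using t by (auto simp: N_def nb_def)
      have V3: "S - {z} - {t} \<subseteq> V" using less(4) by auto
      show ?thesis
      proof (cases "t \<in> Z'")
        case True
        define Z'' where "Z'' = Z' - {t}"
        have c1: "card Z' = Suc (card Z'')" using True fZ' Z''_def by (metis card_Suc_Diff1)
        have "card Z'' < card Z" using cZ c1 by simp
        moreover have "Z'' \<subseteq> S - {z} - {t}" using less(3) Z'_def Z''_def by auto
        moreover have "Suc (Suc n) + card Z'' = m (S - {z} - {t} - Z'')"
        proof -
          have "S - {z} - {t} - Z'' = S - Z" using True Z'_def Z''_def z by auto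
          then show ?thesis using less(5) cZ c1 by simp
        qed
        ultimately have "van th (P (S - {z} - {t})) (Suc (Suc n))"
          using less(1)[of Z'' "S - {z} - {t}" "Suc (Suc n)"] fZ' Z''_def V3 by auto
        then show ?thesis using True by (auto simp: van_def Good_def)
      next
        case False
        have tSZ: "t \<in> S - Z" using tS False Z'_def by auto
        define r where "r = m (S - Z - {t})"
        have il: "m (S - Z) \<le> r + 1" using il1[OF SZV tSZ] r_def by simp
        have set3: "S - {z} - {t} - Z' = S - Z - {t}" using SZ by auto
        have IHt: "\<And>n'. n' + card Z' = r \<Longrightarrow> van th (P (S - {z} - {t})) n' \<and>
            (tc th (P (S - {z} - {t})) n' \<noteq> 0 \<longleftrightarrow> Ex (S - {z} - {t}) Z') \<and>
            (Ex (S - {z} - {t}) Z' \<longrightarrow> (-1) ^ card Z' * tc th (P (S - {z} - {t})) n' * lc (S - {z} - {t} - Z') > 0)"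
        proof -
          fix n' assume "n' + card Z' = r"
          moreover have "card Z' < card Z" using cZ by simp
          moreover have "Z' \<subseteq> S - {z} - {t}" using less(3) Z'_def False by auto
          ultimately show "van th (P (S - {z} - {t})) n' \<and>
            (tc th (P (S - {z} - {t})) n' \<noteq> 0 \<longleftrightarrow> Ex (S - {z} - {t}) Z') \<and>
            (Ex (S - {z} - {t}) Z' \<longrightarrow> (-1) ^ card Z' * tc th (P (S - {z} - {t})) n' * lc (S - {z} - {t} - Z') > 0)"
            using less(1)[of Z' "S - {z} - {t}" n'] fZ' V3 set3 r_def by auto
        qed
        show ?thesis
        proof (cases "r + 1 = m (S - Z)")
          case True
          have "n + card Z' = r" using True less(5) cZ by simp
          then show ?thesis using IHt[of n] True False t set3 r_def by (auto simp: Good_def)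
        next
          case F2: False
          have "(r - card Z') + card Z' = r" "Suc n \<le> r - card Z'" using il F2 less(5) cZ by auto
          then have "van th (P (S - {z} - {t})) (Suc n)" using IHt van_mono by blast
          then show ?thesis using F2 r_def by (auto simp: van_def Good_def)
        qed
      qed
    qed
    have eqP: "P S = X z * P (S - {z}) - (\<Sum>t\<in>N. smult (cw z t) (P (S - {z} - {t})))"
      using P_rec[OF less(4) zS] N_def by simp
    have vS: "van th (P S) n"
      unfolding eqP using vX nbt by (intro van_diff van_sum van_smult) (auto intro: van_mono)
    have tc1: "tc th (X z * P (S - {z})) n = 0" using vX by (simp add: van_def)
    have tcS: "tc th (P S) n = - (\<Sum>t\<in>Good. cw z t * tc th (P (S - {z} - {t})) n)"
    proof -
      have "tc th (P S) n = - (\<Sum>t\<in>N. cw z t * tc th (P (S - {z} - {t})) n)"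
        unfolding eqP using tc1 by simp
      also have "(\<Sum>t\<in>N. cw z t * tc th (P (S - {z} - {t})) n) =
          (\<Sum>t\<in>Good. cw z t * tc th (P (S - {z} - {t})) n)"
        using fN nbt by (intro sum.mono_neutral_right) (auto simp: Good_def)
      finally show ?thesis .
    qed
    have pos_each: "(-1) ^ card Z' * (cw z t * tc th (P (S - {z} - {t})) n) * lc (S - Z) > 0"
      if t: "t \<in> Good" for t
    proof -
      have tN: "t \<in> N" using t by (auto simp: Good_def)
      have tSZ: "t \<in> S - Z" using t z Z'_def by (auto simp: Good_def N_def nb_def)
      have ess: "m (S - Z - {t}) + 1 = m (S - Z)" using t by (auto simp: Good_def)
      have a: "(-1) ^ card Z' * tc th (P (S - {z} - {t})) n * lc (S - Z - {t}) > 0" using nbt[OF tN] t by auto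
      have b: "lc (S - Z) * lc (S - Z - {t}) > 0" using ess_sign[OF SZV tSZ ess] by (simp add: lc_def)
      have "(-1) ^ card Z' * tc th (P (S - {z} - {t})) n * lc (S - Z) > 0"
        using sign_trans[OF a] b by (simp add: mult.commute)
      moreover have "cw z t > 0" using tN cw_pos by (auto simp: N_def nb_def)
      ultimately show ?thesis by (simp add: algebra_simps zero_less_mult_iff)
    qed
    have signS: "(-1) ^ card Z * tc th (P S) n * lc (S - Z) =
        (\<Sum>t\<in>Good. (-1) ^ card Z' * (cw z t * tc th (P (S - {z} - {t})) n) * lc (S - Z))"
      unfolding tcS cZ by (simp add: sum_distrib_left sum_distrib_right algebra_simps sum_negf)
    have fG: "finite Good" using fN by (auto simp: Good_def)
    have tc_iff: "tc th (P S) n \<noteq> 0 \<longleftrightarrow> Good \<noteq> {}"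
    proof
      assume "tc th (P S) n \<noteq> 0"
      then show "Good \<noteq> {}" using tcS by auto
    next
      assume "Good \<noteq> {}"
      then have "(-1) ^ card Z * tc th (P S) n * lc (S - Z) > 0"
        using signS pos_each fG by (simp add: sum_pos)
      then show "tc th (P S) n \<noteq> 0" by auto
    qed
    have Ex_iff: "Ex S Z \<longleftrightarrow> Good \<noteq> {}"
    proof
      assume "Ex S Z"
      then obtain f where f: "inj_on f Z" "\<forall>z\<in>Z. f z \<in> S - Z \<and> {z, f z} \<in> E"
          "m (S - Z - f ` Z) + card Z = m (S - Z)" by (auto simp: Ex_def)
      define t where "t = f z"
      have tSZ: "t \<in> S - Z" "{z, t} \<in> E" using f(2) z t_def by auto
      then have tN: "t \<in> N" using z by (auto simp: N_def nb_def)
      have fZ: "f ` Z = insert t (f ` Z')" using z Z'_def t_def by auto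
      have tni: "t \<notin> f ` Z'" using f(1) z Z'_def t_def by (auto simp: inj_on_def)
      have sets: "S - Z - f ` Z = S - Z - {t} - f ` Z'" using fZ by auto
      have "m (S - Z - {t}) \<le> m (S - Z - {t} - f ` Z') + card (f ` Z' \<inter> (S - Z - {t}))"
        using il_set[of "S - Z - {t}" "f ` Z'"] less(4) fZ' by auto
      also have "card (f ` Z' \<inter> (S - Z - {t})) \<le> card Z'"
      proof -
        have "card (f ` Z' \<inter> (S - Z - {t})) \<le> card (f ` Z')"
          by (rule card_mono[OF finite_imageI[OF fZ']]) auto
        then show ?thesis using card_image_le[OF fZ', of f] by linarith
      qed
      finally have h1: "m (S - Z - {t}) \<le> m (S - Z - {t} - f ` Z') + card Z'" by simp
      have h2: "m (S - Z) \<le> m (S - Z - {t}) + 1" using il1[OF SZV tSZ(1)] .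
      have h3: "m (S - Z - {t} - f ` Z') + card Z' + 1 = m (S - Z)" using f(3) sets cZ by simp
      have ess: "m (S - Z - {t}) + 1 = m (S - Z)" using h1 h2 h3 by arith
      have "Ex (S - {z} - {t}) Z'"
        unfolding Ex_def
      proof (intro exI conjI)
        show "inj_on f Z'" using f(1) Z'_def by (auto intro: inj_on_subset)
        show "\<forall>z'\<in>Z'. f z' \<in> S - {z} - {t} - Z' \<and> {z', f z'} \<in> E"
          using f(2) Z'_def tni z by auto
        have "S - {z} - {t} - Z' - f ` Z' = S - Z - {t} - f ` Z'" using SZ by auto
        moreover have "S - {z} - {t} - Z' = S - Z - {t}" using SZ by auto
        ultimately show "m (S - {z} - {t} - Z' - f ` Z') + card Z' = m (S - {z} - {t} - Z')"
          using h1 h2 h3 ess by simp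
      qed
      then have "t \<in> Good" using tN tSZ ess z Z'_def by (auto simp: Good_def)
      then show "Good \<noteq> {}" by blast
    next
      assume "Good \<noteq> {}"
      then obtain t where t: "t \<in> Good" by blast
      have tN: "t \<in> N" and tZ': "t \<notin> Z'" and ess: "m (S - Z - {t}) + 1 = m (S - Z)"
        and ex: "Ex (S - {z} - {t}) Z'" using t by (auto simp: Good_def)
      have tSZ: "t \<in> S - Z" "{z, t} \<in> E" using tN tZ' z Z'_def by (auto simp: N_def nb_def)
      obtain f where f: "inj_on f Z'" "\<forall>z'\<in>Z'. f z' \<in> S - {z} - {t} - Z' \<and> {z', f z'} \<in> E"
          "m (S - {z} - {t} - Z' - f ` Z') + card Z' = m (S - {z} - {t} - Z')"
        using ex by (auto simp: Ex_def)
      define g where "g = f(z := t)"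
      have zZ': "z \<notin> Z'" using Z'_def by simp
      have gZ': "g ` Z' = f ` Z'" using zZ' g_def by (auto simp: image_def)
      have gZ: "g ` Z = insert t (f ` Z')" using z Z'_def gZ' g_def by auto
      show "Ex S Z" unfolding Ex_def
      proof (intro exI conjI)
        have "inj_on g Z'" using f(1) zZ' g_def by (simp add: inj_on_def)
        moreover have "g z \<notin> g ` Z'"
        proof -
          have "g z = t" by (simp add: g_def)
          moreover have "t \<notin> f ` Z'"
          proof
            assume "t \<in> f ` Z'"
            then obtain z' where "z' \<in> Z'" "f z' = t" by blast
            then show False using f(2) by force
          qed
          ultimately show ?thesis using gZ' by simp
        qed
        moreover have ZZ: "Z = insert z Z'" using z Z'_def by auto
        ultimately show "inj_on g Z" using zZ' by (simp add: ZZ)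
        show "\<forall>z'\<in>Z. g z' \<in> S - Z \<and> {z', g z'} \<in> E"
        proof
          fix z' assume z': "z' \<in> Z"
          show "g z' \<in> S - Z \<and> {z', g z'} \<in> E"
          proof (cases "z' = z")
            case True then show ?thesis using tSZ by (simp add: g_def)
          next
            case False
            then have "z' \<in> Z'" "g z' = f z'" using z' Z'_def g_def by auto
            then show ?thesis using f(2) SZ by auto
          qed
        qed
        have "S - Z - g ` Z = S - {z} - {t} - Z' - f ` Z'" using gZ SZ by auto
        moreover have "S - {z} - {t} - Z' = S - Z - {t}" using SZ by auto
        ultimately show "m (S - Z - g ` Z) + card Z = m (S - Z)" using f(3) ess cZ by simp
      qed
    qed
    show ?thesis
    proof (intro conjI)
      show "van th (P S) n" by (rule vS)
      show "tc th (P S) n \<noteq> 0 \<longleftrightarrow> Ex S Z" using tc_iff Ex_iff by simp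
      show "Ex S Z \<longrightarrow> (-1) ^ card Z * tc th (P S) n * lc (S - Z) > 0"
        using Ex_iff signS pos_each fG by (auto intro: sum_pos)
    qed
  qed
qed

lemma BEm:
  assumes "finite Z" "Z \<subseteq> S" "S \<subseteq> V"
  shows "m (S - Z) = m S + card Z \<longleftrightarrow> Ex S Z"
proof
  assume eq: "m (S - Z) = m S + card Z"
  then have "tc th (P S) (m S) \<noteq> 0 \<longleftrightarrow> Ex S Z" using BE[OF assms, of "m S"] by simp
  then show "Ex S Z" using mP[OF assms(3)] by simp
next
  assume ex: "Ex S Z"
  then have "card Z \<le> m (S - Z)" by (auto simp: Ex_def)
  then have h: "(m (S - Z) - card Z) + card Z = m (S - Z)" by simp
  have "van th (P S) (m (S - Z) - card Z)" "tc th (P S) (m (S - Z) - card Z) \<noteq> 0"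
    using BE[OF assms h] ex by auto
  then have "m S = m (S - Z) - card Z" using order_eqI m_def by metis
  then show "m (S - Z) = m S + card Z" using h by simp
qed

end


context gr begin

lemma fin_subV: "S \<subseteq> V \<Longrightarrow> finite S" by (rule fin_sub)

lemma claim_aux:
  assumes SV: "S \<subseteq> V" and ZS: "Z \<subseteq> S" and bar: "m (S - Z) = m S + card Z"
    and KT: "K \<subseteq> S - Z" and cl: "closed (S - Z) K" and mK: "m K = 1"
    and x: "x \<in> K" and mKx: "m (K - {x}) = 0"
  defines "R \<equiv> S - Z - K"
  shows "m (S - {x}) + 1 = m S \<longleftrightarrow>
    (\<exists>f. inj_on f Z \<and> (\<forall>z\<in>Z. f z \<in> R \<and> {z, f z} \<in> E) \<and> m (R - f ` Z) + card Z = m R)"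
proof -
  have fZ: "finite Z" using ZS SV fin_sub finite_subset by blast
  have TV: "S - Z \<subseteq> V" using SV by auto
  have mT: "m (S - Z) = 1 + m R" using m_closed[OF KT TV cl] mK R_def by simp
  have xZ: "x \<notin> Z" using x KT by auto
  have s1: "S - {x} - Z = (S - Z) - {x}" by auto
  have cl1: "closed (S - Z - {x}) (K - {x})" using closed_diff[OF cl] .
  have mTx: "m (S - {x} - Z) = m R"
  proof -
    have "m (S - Z - {x}) = m (K - {x}) + m (S - Z - {x} - (K - {x}))"
      using m_closed[OF _ _ cl1] KT SV by auto
    moreover have "S - Z - {x} - (K - {x}) = R" using R_def x by auto
    ultimately show ?thesis using mKx s1 by simp
  qed
  have BE1: "m (S - {x} - Z) = m (S - {x}) + card Z \<longleftrightarrow> Ex (S - {x}) Z"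
    by (rule BEm[OF fZ]) (use ZS xZ SV in auto)
  have step1: "m (S - {x}) + 1 = m S \<longleftrightarrow> Ex (S - {x}) Z"
    using BE1 mTx mT bar by auto
  have step2: "Ex (S - {x}) Z \<longleftrightarrow>
    (\<exists>f. inj_on f Z \<and> (\<forall>z\<in>Z. f z \<in> R \<and> {z, f z} \<in> E) \<and> m (R - f ` Z) + card Z = m R)"
  proof
    assume "Ex (S - {x}) Z"
    then obtain f where f: "inj_on f Z" "\<forall>z\<in>Z. f z \<in> S - {x} - Z \<and> {z, f z} \<in> E"
      "m (S - {x} - Z - f ` Z) + card Z = m (S - {x} - Z)" by (auto simp: Ex_def)
    define F where "F = f ` Z"
    have fF: "finite F" using fZ F_def by simp
    have cF: "card F = card Z" using card_image[OF f(1)] F_def by simp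
    have cl2: "closed (S - Z - ({x} \<union> F)) (K - ({x} \<union> F))" using closed_diff[OF cl] .
    have "m (S - Z - ({x} \<union> F)) = m (K - ({x} \<union> F)) + m (S - Z - ({x} \<union> F) - (K - ({x} \<union> F)))"
      using m_closed[OF _ _ cl2] KT SV by auto
    moreover have "S - Z - ({x} \<union> F) - (K - ({x} \<union> F)) = R - F" using R_def x by auto
    moreover have "S - Z - ({x} \<union> F) = S - {x} - Z - F" by auto
    ultimately have e1: "m (S - {x} - Z - F) = m (K - ({x} \<union> F)) + m (R - F)" by simp
    have RV: "R \<subseteq> V" using SV R_def by auto
    have e2: "m R \<le> m (R - F) + card (F \<inter> R)" using il_set[OF RV fF] by simp
    have e3: "card (F \<inter> R) \<le> card F" by (rule card_mono[OF fF]) auto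
    have e4: "m (R - F) + m (K - ({x} \<union> F)) + card Z = m R" using f(3) e1 mTx F_def by simp
    have e5: "card (F \<inter> R) = card F" using e2 e3 e4 cF by linarith
    have FR: "F \<subseteq> R"
    proof -
      have "F \<inter> R = F" using card_subset_eq[OF fF _ e5] by auto
      then show ?thesis by blast
    qed
    show "\<exists>f. inj_on f Z \<and> (\<forall>z\<in>Z. f z \<in> R \<and> {z, f z} \<in> E) \<and> m (R - f ` Z) + card Z = m R"
    proof (intro exI conjI)
      show "inj_on f Z" by (rule f(1))
      show "\<forall>z\<in>Z. f z \<in> R \<and> {z, f z} \<in> E" using FR f(2) F_def by auto
      have "m (R - F) + card Z = m R" using e2 e4 e5 cF by linarith
      then show "m (R - f ` Z) + card Z = m R" using F_def by simp
    qed
  next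
    assume "\<exists>f. inj_on f Z \<and> (\<forall>z\<in>Z. f z \<in> R \<and> {z, f z} \<in> E) \<and> m (R - f ` Z) + card Z = m R"
    then obtain f where f: "inj_on f Z" "\<forall>z\<in>Z. f z \<in> R \<and> {z, f z} \<in> E" "m (R - f ` Z) + card Z = m R"
      by blast
    define F where "F = f ` Z"
    have FR: "F \<subseteq> R" using f(2) F_def by auto
    have cl2: "closed (S - Z - ({x} \<union> F)) (K - ({x} \<union> F))" using closed_diff[OF cl] .
    have "m (S - Z - ({x} \<union> F)) = m (K - ({x} \<union> F)) + m (S - Z - ({x} \<union> F) - (K - ({x} \<union> F)))"
      using m_closed[OF _ _ cl2] KT SV by auto
    moreover have "S - Z - ({x} \<union> F) - (K - ({x} \<union> F)) = R - F" using R_def x by auto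
    moreover have "S - Z - ({x} \<union> F) = S - {x} - Z - F" by auto
    moreover have "K - ({x} \<union> F) = K - {x}" using FR R_def by auto
    ultimately have e1: "m (S - {x} - Z - F) = m (R - F)" using mKx by simp
    show "Ex (S - {x}) Z" unfolding Ex_def
    proof (intro exI conjI)
      show "inj_on f Z" by (rule f(1))
      show "\<forall>z\<in>Z. f z \<in> S - {x} - Z \<and> {z, f z} \<in> E" using f(2) R_def x by auto
      show "m (S - {x} - Z - f ` Z) + card Z = m (S - {x} - Z)" using e1 f(3) mTx F_def by simp
    qed
  qed
  show ?thesis using step1 step2 by simp
qed

lemma claim:
  assumes "S \<subseteq> V" "Z \<subseteq> S" "m (S - Z) = m S + card Z"
    "K \<subseteq> S - Z" "closed (S - Z) K" "m K = 1"
    "x \<in> K" "m (K - {x}) = 0" "y \<in> K" "m (K - {y}) = 0"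
    "m (S - {y}) + 1 = m S"
  shows "m (S - {x}) + 1 = m S"
  using claim_aux[OF assms(1-8)] claim_aux[OF assms(1-6) assms(9,10)] assms(11) by simp

end


context gr begin

definition conn :: "'a set \<Rightarrow> bool" where
  "conn K \<longleftrightarrow> (\<forall>B. B \<subseteq> K \<longrightarrow> B \<noteq> {} \<longrightarrow> closed K B \<longrightarrow> B = K)"

definition radj :: "'a set \<Rightarrow> 'a \<Rightarrow> 'a \<Rightarrow> bool" where
  "radj T x y \<longleftrightarrow> x \<in> T \<and> y \<in> T \<and> {x, y} \<in> E"

definition compT :: "'a set \<Rightarrow> 'a \<Rightarrow> 'a set" where
  "compT T x = {y \<in> T. (radj T)\<^sup>*\<^sup>* x y}"

lemma radj_sym: "radj T x y \<Longrightarrow> radj T y x"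
  by (auto simp: radj_def insert_commute)

lemma reach_sym: "(radj T)\<^sup>*\<^sup>* x y \<Longrightarrow> (radj T)\<^sup>*\<^sup>* y x"
proof (induct rule: rtranclp_induct)
  case base then show ?case by simp
next
  case (step y z)
  then have "radj T z y" by (simp add: radj_sym)
  then show ?case using step(3) by (rule converse_rtranclp_into_rtranclp)
qed

lemma compT_sub: "compT T x \<subseteq> T" by (auto simp: compT_def)
lemma compT_mem: "x \<in> T \<Longrightarrow> x \<in> compT T x" by (auto simp: compT_def)

lemma compT_adj: "x \<in> T \<Longrightarrow> y \<in> compT T x \<Longrightarrow> z \<in> T \<Longrightarrow> {y, z} \<in> E \<Longrightarrow> z \<in> compT T x"
  unfolding compT_def by (auto simp: radj_def intro: rtranclp.rtrancl_into_rtrancl)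

lemma compT_closed: "x \<in> T \<Longrightarrow> closed T (compT T x)"
  unfolding closed_def using compT_adj by blast

lemma compT_conn:
  assumes "x \<in> T" shows "conn (compT T x)"
  unfolding conn_def
proof (intro allI impI)
  fix B assume B: "B \<subseteq> compT T x" "B \<noteq> {}" "closed (compT T x) B"
  obtain z where z: "z \<in> B" using B(2) by blast
  have zr: "(radj T)\<^sup>*\<^sup>* x z" using z B(1) by (auto simp: compT_def)
  have "y \<in> B" if y: "y \<in> compT T x" for y
  proof -
    have "(radj T)\<^sup>*\<^sup>* x y" using y by (auto simp: compT_def)
    then have zy: "(radj T)\<^sup>*\<^sup>* z y" using reach_sym[OF zr] by (rule rtranclp_trans[rotated])
    have "y' \<in> B" if "(radj T)\<^sup>*\<^sup>* z y'" for y'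
      using that
    proof (induct rule: rtranclp_induct)
      case base then show ?case by (rule z)
    next
      case (step a b)
      have "(radj T)\<^sup>*\<^sup>* x b" using rtranclp_trans[OF zr step(1)] step(2)
        by (rule rtranclp.rtrancl_into_rtrancl)
      then have "b \<in> compT T x" using step(2) by (auto simp: compT_def radj_def)
      moreover have "{a, b} \<in> E" using step(2) by (simp add: radj_def)
      ultimately show ?case using B(3) step(3) unfolding closed_def by blast
    qed
    then show ?thesis using zy by blast
  qed
  then show "B = compT T x" using B(1) by blast
qed

lemma closed_trans: "closed T B \<Longrightarrow> closed B K \<Longrightarrow> K \<subseteq> B \<Longrightarrow> closed T K"
  unfolding closed_def by blast

definition essS :: "'a set \<Rightarrow> 'a \<Rightarrow> bool" where
  "essS S v \<longleftrightarrow> v \<in> S \<and> m (S - {v}) + 1 = m S"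
definition neuS :: "'a set \<Rightarrow> 'a \<Rightarrow> bool" where
  "neuS S v \<longleftrightarrow> v \<in> S \<and> m (S - {v}) = m S"
definition posS :: "'a set \<Rightarrow> 'a \<Rightarrow> bool" where
  "posS S v \<longleftrightarrow> v \<in> S \<and> m (S - {v}) = m S + 1"
definition specS :: "'a set \<Rightarrow> 'a \<Rightarrow> bool" where
  "specS S v \<longleftrightarrow> v \<in> S \<and> \<not> essS S v \<and> (\<exists>u. essS S u \<and> {u, v} \<in> E)"
definition DS :: "'a set \<Rightarrow> 'a set" where "DS S = {v. essS S v}"
definition AS :: "'a set \<Rightarrow> 'a set" where "AS S = {v. specS S v}"
definition NS :: "'a set \<Rightarrow> 'a set" where "NS S = {v. neuS S v}"
definition PS :: "'a set \<Rightarrow> 'a set" where "PS S = {v. posS S v \<and> \<not> specS S v}"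
definition critS :: "'a set \<Rightarrow> bool" where
  "critS K \<longleftrightarrow> (\<forall>v\<in>K. essS K v) \<and> m K = 1"

lemma DS_sub: "DS S \<subseteq> S" by (auto simp: DS_def essS_def)
lemma AS_sub: "AS S \<subseteq> S" by (auto simp: AS_def specS_def)

lemma types3: "S \<subseteq> V \<Longrightarrow> v \<in> S \<Longrightarrow> essS S v \<or> neuS S v \<or> posS S v"
  using il1[of S v] il2[of S v] unfolding essS_def neuS_def posS_def by linarith

lemma ess_closed:
  assumes "K \<subseteq> T" "T \<subseteq> V" "closed T K" "v \<in> K"
  shows "m (T - {v}) = m (K - {v}) + m (T - K)" "m T = m K + m (T - K)"
proof -
  show "m T = m K + m (T - K)" using m_closed[OF assms(1-3)] .
  have "m (T - {v}) = m (K - {v}) + m (T - {v} - (K - {v}))"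
    by (rule m_closed[OF _ _ closed_diff[OF assms(3), of "{v}"]]) (use assms(1,2) in auto)
  moreover have "T - {v} - (K - {v}) = T - K" using assms(4) by auto
  ultimately show "m (T - {v}) = m (K - {v}) + m (T - K)" by simp
qed

lemma essS_closed:
  assumes "K \<subseteq> T" "T \<subseteq> V" "closed T K" "v \<in> K"
  shows "essS T v \<longleftrightarrow> essS K v"
  using ess_closed[OF assms] assms(1,4) unfolding essS_def by auto

lemma gallai_from:
  assumes CV: "C \<subseteq> V" and Cne: "C \<noteq> {}" and cC: "conn C" and allE: "\<forall>v\<in>C. essS C v"
    and core: "\<And>v. v \<in> C \<Longrightarrow> m (C - {v} - AS (C - {v})) = m (C - {v}) + card (AS (C - {v})) \<and>
        DS (C - {v} - AS (C - {v})) = DS (C - {v}) \<and> closed (C - {v} - AS (C - {v})) (DS (C - {v})) \<and>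
        m (C - {v} - AS (C - {v}) - DS (C - {v})) = 0"
  shows "m C = 1"
proof (rule ccontr)
  assume k1: "m C \<noteq> 1"
  obtain v where v: "v \<in> C" using Cne by blast
  have ev: "m (C - {v}) + 1 = m C" using allE v by (auto simp: essS_def)
  define L where "L = C - {v}"
  define A where "A = AS L"
  define B where "B = DS L"
  have LV: "L \<subseteq> V" using CV L_def by auto
  have mL: "m L + 1 = m C" using ev L_def by simp
  have mL1: "m L \<ge> 1" using mL k1 by simp
  have cr: "m (L - A) = m L + card A" "DS (L - A) = B" "closed (L - A) B" "m (L - A - B) = 0"
    using core[OF v] L_def A_def B_def by auto
  have nbv: "t \<notin> B" if t: "t \<in> L" "{v, t} \<in> E" for t
  proof
    assume "t \<in> B"
    have tC: "t \<in> C" "t \<noteq> v" using t L_def by auto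
    have "m (C - {v} - {t}) + 1 \<noteq> m (C - {v})"
      using adj_EE[OF CV v tC(1) tC(2)[symmetric] t(2)] ev allE tC(1) by (auto simp: essS_def)
    then show False using \<open>t \<in> B\<close> by (auto simp: B_def DS_def essS_def L_def)
  qed
  have BL': "B \<subseteq> L - A" using cr(2) DS_sub by metis
  have Bne: "B \<noteq> {}" using ess_exists[OF LV mL1] by (auto simp: B_def DS_def essS_def)
  have fA: "finite A" using fin_sub[OF LV] AS_sub finite_subset A_def by metis
  show False
  proof (cases "A = {}")
    case True
    have "closed C B" unfolding closed_def
    proof (intro ballI)
      fix x y assume x: "x \<in> B" and y: "y \<in> C - B"
      show "{x, y} \<notin> E"
      proof (cases "y = v")
        case True then show ?thesis using nbv x BL' by (auto simp: insert_commute)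
      next
        case False then have "y \<in> L - A - B" using y True L_def by auto
        then show ?thesis using cr(3) x unfolding closed_def by blast
      qed
    qed
    then have "B = C" using cC Bne BL' L_def unfolding conn_def by blast
    then show False using BL' v L_def by auto
  next
    case False
    then obtain x where x: "x \<in> A" by blast
    have xC: "x \<in> C" using x AS_sub L_def A_def by blast
    have ex: "m (C - {x}) + 1 = m C" using allE xC by (auto simp: essS_def)
    have up: "m (C - {x} - (A - {x})) \<le> m (C - {x}) + card ((A - {x}) \<inter> (C - {x}))"
      using il_set[of "C - {x}" "A - {x}"] CV fA by auto
    have cA: "card ((A - {x}) \<inter> (C - {x})) \<le> card A - 1"
    proof -
      have "card ((A - {x}) \<inter> (C - {x})) \<le> card (A - {x})" using fA by (intro card_mono) auto
      then show ?thesis using x fA by (simp add: card_Diff_singleton)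
    qed
    have CA: "C - {x} - (A - {x}) = C - A" using x by auto
    have clB: "closed (C - A) B" unfolding closed_def
    proof (intro ballI)
      fix x' y assume x': "x' \<in> B" and y: "y \<in> C - A - B"
      show "{x', y} \<notin> E"
      proof (cases "y = v")
        case True then show ?thesis using nbv x' BL' by (auto simp: insert_commute)
      next
        case False then have "y \<in> L - A - B" using y L_def by auto
        then show ?thesis using cr(3) x' unfolding closed_def by blast
      qed
    qed
    have "m (C - A) = m B + m (C - A - B)" using m_closed[OF _ _ clB] BL' CV L_def by auto
    moreover have "m (L - A) = m B + m (L - A - B)" using m_closed[OF BL' _ cr(3)] LV by auto
    ultimately have "m (C - A) \<ge> m L + card A" using cr(1,4) by simp
    moreover have "card A \<ge> 1" using x fA by (metis One_nat_def card_gt_0_iff empty_iff less_eq_Suc_le)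
    moreover have "m (C - A) \<le> m (C - {x}) + card ((A - {x}) \<inter> (C - {x}))" using up CA by simp
    ultimately show False using cA ex mL by linarith
  qed
qed

end


context gr begin

definition Core :: "'a set \<Rightarrow> bool" where
  "Core S \<longleftrightarrow> m (S - AS S) = m S + card (AS S) \<and> DS (S - AS S) = DS S \<and>
     NS (S - AS S) = NS S \<and> PS (S - AS S) = PS S \<and> AS (S - AS S) = {} \<and>
     closed (S - AS S) (DS S) \<and> m (S - AS S - DS S) = 0 \<and>
     (\<forall>K. K \<subseteq> DS S \<longrightarrow> K \<noteq> {} \<longrightarrow> closed (DS S) K \<longrightarrow> conn K \<longrightarrow> critS K)"

lemma stab:
  assumes SV: "S \<subseteq> V" and sa: "specS S a" and IH: "\<And>v. v \<in> S \<Longrightarrow> Core (S - {v})"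
  shows "m (S - {a}) = m S + 1 \<and> DS (S - {a}) = DS S \<and> NS (S - {a}) = NS S \<and>
         PS (S - {a}) = PS S \<and> AS (S - {a}) = AS S - {a}"
proof -
  obtain u where u: "essS S u" "{u, a} \<in> E" and aS: "a \<in> S" and na: "\<not> essS S a"
    using sa by (auto simp: specS_def)
  have uS: "u \<in> S" and eu: "m (S - {u}) + 1 = m S" using u by (auto simp: essS_def)
  have ua: "u \<noteq> a" using u na by auto
  have na': "m (S - {a}) + 1 \<noteq> m S" using na aS by (auto simp: essS_def)
  have s1: "m (S - {a}) = m S + 1" by (rule special_pos[OF SV uS aS ua u(2) eu na'])
  have SaV: "S - {a} \<subseteq> V" using SV by auto
  have D1: "DS S \<subseteq> DS (S - {a})"
  proof
    fix v assume "v \<in> DS S"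
    then have v: "v \<in> S" "m (S - {v}) + 1 = m S" by (auto simp: DS_def essS_def)
    have va: "v \<noteq> a" using v na aS by (auto simp: essS_def)
    have "m (S - {a} - {v}) + 1 = m (S - {a})" by (rule G1[OF SV aS v(1) va[symmetric] v(2) na'])
    then show "v \<in> DS (S - {a})" using v va by (auto simp: DS_def essS_def)
  qed
  have D2: "DS (S - {a}) \<subseteq> DS S"
  proof
    fix v assume "v \<in> DS (S - {a})"
    then have v: "v \<in> S" "v \<noteq> a" "m (S - {a} - {v}) + 1 = m (S - {a})" by (auto simp: DS_def essS_def)
    have c: "m (S - {a} - {v}) = m S" using v(3) s1 by simp
    show "v \<in> DS S"
    proof (rule ccontr)
      assume nv: "v \<notin> DS S"
      then have nv': "m (S - {v}) + 1 \<noteq> m S" using v by (auto simp: DS_def essS_def)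
      have uv: "u \<noteq> v" using nv u by (auto simp: DS_def)
      have SvV: "S - {v} \<subseteq> V" using SV by auto
      have uL: "m (S - {v} - {u}) + 1 = m (S - {v})"
        by (rule G1[OF SV v(1) uS uv[symmetric] eu nv'])
      have aL: "m (S - {v} - {a}) = m S" using c by (simp add: Diff_comm2)
      have ty: "m (S - {v}) = m S \<or> m (S - {v}) = m S + 1"
        using il1[OF SV v(1)] il2[OF SV v(1)] nv' by linarith
      show False
      proof (cases "m (S - {v}) = m S")
        case True
        show False using adj_EN[OF SvV _ _ ua u(2) uL] uS aS uv v(2) aL True by auto
      next
        case False
        then have mL: "m (S - {v}) = m S + 1" using ty by simp
        define L where "L = S - {v}"
        define A where "A = AS L"
        define B where "B = DS L"
        have LV: "L \<subseteq> V" using SvV L_def by simp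
        have cL: "Core L" using IH[OF v(1)] L_def by simp
        have cr: "m (L - A) = m L + card A" "DS (L - A) = B" "closed (L - A) B"
          "\<And>K. K \<subseteq> B \<Longrightarrow> K \<noteq> {} \<Longrightarrow> closed B K \<Longrightarrow> conn K \<Longrightarrow> critS K"
          using cL unfolding Core_def A_def B_def by auto
        have uB: "u \<in> B" using uL uS uv by (auto simp: B_def DS_def essS_def L_def)
        have aB: "a \<in> B" using aL mL aS v(2) by (auto simp: B_def DS_def essS_def L_def)
        have fA: "finite A" using fin_sub[OF LV] AS_sub finite_subset A_def by metis
        have vA: "v \<notin> A" using AS_sub A_def L_def by blast
        define Z where "Z = insert v A"
        have ZS: "Z \<subseteq> S" using AS_sub A_def L_def v(1) Z_def by auto
        have SZ: "S - Z = L - A" using Z_def L_def by auto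
        have cZ: "card Z = card A + 1" using fA vA Z_def by simp
        have bar: "m (S - Z) = m S + card Z" using SZ cr(1) mL cZ L_def by simp
        have BLA: "B \<subseteq> L - A" using cr(2) DS_sub by metis
        define K where "K = compT B u"
        have aK: "a \<in> K" using compT_adj[OF uB compT_mem[OF uB] aB u(2)] K_def by simp
        have uK: "u \<in> K" using compT_mem[OF uB] K_def by simp
        have KB: "K \<subseteq> B" using compT_sub K_def by simp
        have clK: "closed (S - Z) K" using closed_trans[OF cr(3) compT_closed[OF uB] compT_sub] SZ K_def by simp
        have "closed B K" "conn K" using compT_closed[OF uB] compT_conn[OF uB] K_def by auto
        then have crK: "critS K" using cr(4)[OF KB] uK by blast
        have mK: "m K = 1" "m (K - {u}) = 0" "m (K - {a}) = 0"
          using crK uK aK by (auto simp: critS_def essS_def)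
        have "m (S - {a}) + 1 = m S"
          by (rule claim[OF SV ZS bar _ clK mK(1) aK mK(3) uK mK(2) eu]) (use KB BLA SZ in auto)
        then show False using na' by simp
      qed
    qed
  qed
  have DD: "DS (S - {a}) = DS S" using D1 D2 by blast
  have essEq: "\<And>x. essS (S - {a}) x \<longleftrightarrow> essS S x" using DD by (auto simp: DS_def)
  have tN: "neuS (S - {a}) v \<longleftrightarrow> neuS S v" and tP: "posS (S - {a}) v \<longleftrightarrow> posS S v" if va: "v \<noteq> a" for v
  proof -
    have fw: "(neuS S v \<longrightarrow> neuS (S - {a}) v) \<and> (posS S v \<longrightarrow> posS (S - {a}) v)"
    proof (cases "v \<in> S")
      case False then show ?thesis by (auto simp: neuS_def posS_def)
    next
      case True
      note i = il_pair[OF SV aS True va[symmetric]]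
      have ne: "\<not> essS (S - {a}) v" if "\<not> essS S v" using that essEq by simp
      show ?thesis
      proof (intro conjI impI)
        assume n: "neuS S v"
        then have "\<not> essS S v" by (auto simp: neuS_def essS_def)
        then have "m (S - {a} - {v}) + 1 \<noteq> m (S - {a})" using ne True va by (auto simp: essS_def)
        then show "neuS (S - {a}) v" using n i s1 True va by (auto simp: neuS_def)
      next
        assume p: "posS S v"
        then have "\<not> essS S v" by (auto simp: posS_def essS_def)
        then have c1: "m (S - {a} - {v}) + 1 \<noteq> m (S - {a})" using ne True va by (auto simp: essS_def)
        have c2: "m (S - {a} - {v}) \<noteq> m S + 1"
          using PP[OF SV aS True va[symmetric] s1] p by (auto simp: posS_def)
        show "posS (S - {a}) v" using p i s1 c1 c2 True va by (auto simp: posS_def)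
      qed
    qed
    have ex: "v \<in> S \<Longrightarrow> essS S v \<or> neuS S v \<or> posS S v" using types3[OF SV] by blast
    have disj: "\<not> (neuS (S - {a}) v \<and> posS (S - {a}) v)" by (auto simp: neuS_def posS_def)
    have dE: "\<not> neuS (S - {a}) v \<and> \<not> posS (S - {a}) v" if ev: "essS S v"
    proof -
      have "essS (S - {a}) v" using essEq ev by blast
      then have "m (S - {a} - {v}) + 1 = m (S - {a})" by (simp add: essS_def)
      then show ?thesis by (auto simp: neuS_def posS_def)
    qed
    have inS: "neuS (S - {a}) v \<or> posS (S - {a}) v \<Longrightarrow> v \<in> S" by (auto simp: neuS_def posS_def)
    show "neuS (S - {a}) v \<longleftrightarrow> neuS S v" using fw ex disj dE inS by blast
    show "posS (S - {a}) v \<longleftrightarrow> posS S v" using fw ex disj dE inS by blast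
  qed
  have tS: "specS (S - {a}) v \<longleftrightarrow> specS S v \<and> v \<noteq> a" for v
    using essEq by (auto simp: specS_def)
  have aP: "posS S a" using s1 aS by (simp add: posS_def)
  have NN: "NS (S - {a}) = NS S"
  proof -
    have "a \<notin> NS S" using aP by (auto simp: NS_def neuS_def posS_def)
    moreover have "a \<notin> NS (S - {a})" by (auto simp: NS_def neuS_def)
    ultimately show ?thesis using tN unfolding NS_def by (metis mem_Collect_eq subsetI subset_antisym)
  qed
  have PP': "PS (S - {a}) = PS S"
  proof -
    have "a \<notin> PS S" using sa by (auto simp: PS_def)
    moreover have "a \<notin> PS (S - {a})" by (auto simp: PS_def posS_def)
    ultimately show ?thesis unfolding PS_def
    proof (intro set_eqI iffI)
      fix x assume "x \<in> {v. posS (S - {a}) v \<and> \<not> specS (S - {a}) v}"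
      moreover have "x \<noteq> a" using calculation by (auto simp: posS_def)
      ultimately show "x \<in> {v. posS S v \<and> \<not> specS S v}" using tP tS by auto
    next
      fix x assume x: "x \<in> {v. posS S v \<and> \<not> specS S v}"
      have "x \<noteq> a" using x sa by auto
      then show "x \<in> {v. posS (S - {a}) v \<and> \<not> specS (S - {a}) v}" using x tP tS by auto
    qed
  qed
  have AA: "AS (S - {a}) = AS S - {a}" using tS by (auto simp: AS_def)
  show ?thesis using s1 DD NN PP' AA by blast
qed

end


context gr begin

lemma core: "S \<subseteq> V \<Longrightarrow> Core S"
proof (induct "card S" arbitrary: S rule: less_induct)
  case less
  have SV: "S \<subseteq> V" by (rule less(2))
  have fS: "finite S" using fin_sub[OF SV] .
  have IH: "\<And>T. T \<subset> S \<Longrightarrow> Core T"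
  proof -
    fix T assume "T \<subset> S"
    then have "card T < card S" "T \<subseteq> V" using fS SV psubset_card_mono by auto
    then show "Core T" using less(1) by blast
  qed
  have IHv: "Core (S - {v})" if v: "v \<in> S" for v
  proof -
    have "S - {v} \<subset> S" using v by auto
    then show ?thesis by (rule IH)
  qed
  show "Core S"
  proof (cases "AS S = {}")
    case False
    then obtain a where aA: "a \<in> AS S" by blast
    then have sa: "specS S a" by (simp add: AS_def)
    have aS: "a \<in> S" using sa by (simp add: specS_def)
    note st = stab[OF SV sa IHv]
    have cSa: "Core (S - {a})" using IHv[OF aS] .
    define A where "A = AS S"
    have fA: "finite A" using fS AS_sub A_def finite_subset by metis
    have A': "AS (S - {a}) = A - {a}" using st A_def by simp
    have set: "S - {a} - AS (S - {a}) = S - A" using A' aA A_def by auto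
    have aA': "a \<in> A" using aA A_def by simp
    have c0: "card A > 0" using fA aA' card_gt_0_iff by blast
    have cA: "card (A - {a}) + 1 = card A" using card_Diff_singleton[OF aA'] c0 by simp
    have D: "DS (S - {a}) = DS S" using st by simp
    have h: "m (S - A) = m (S - {a}) + card (A - {a}) \<and> DS (S - A) = DS S \<and>
     NS (S - A) = NS (S - {a}) \<and> PS (S - A) = PS (S - {a}) \<and> AS (S - A) = {} \<and>
     closed (S - A) (DS S) \<and> m (S - A - DS S) = 0 \<and>
     (\<forall>K. K \<subseteq> DS S \<longrightarrow> K \<noteq> {} \<longrightarrow> closed (DS S) K \<longrightarrow> conn K \<longrightarrow> critS K)"
    proof -
      have set': "S - {a} - (A - {a}) = S - A" using aA' by auto
      show ?thesis using cSa unfolding Core_def A' set' D .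
    qed
    have st2: "m (S - {a}) = m S + 1" "NS (S - {a}) = NS S" "PS (S - {a}) = PS S" using st by auto
    have "m (S - A) = m S + card A" using h st2(1) cA by simp
    then show ?thesis unfolding Core_def A_def[symmetric] using h st2 by simp
  next
    case True
    define D where "D = DS S"
    have clD: "closed S D" unfolding closed_def
    proof (intro ballI)
      fix x y assume x: "x \<in> D" and y: "y \<in> S - D"
      show "{x, y} \<notin> E"
      proof
        assume e: "{x, y} \<in> E"
        have "specS S y" using x y e by (auto simp: specS_def D_def DS_def)
        then show False using True by (auto simp: AS_def)
      qed
    qed
    have DS': "D \<subseteq> S" using DS_sub D_def by metis
    have m0: "m (S - D) = 0"
    proof (rule ccontr)
      assume "m (S - D) \<noteq> 0"
      then obtain v where v: "v \<in> S - D" "m (S - D - {v}) + 1 = m (S - D)"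
        using ess_exists[of "S - D"] SV by auto
      have "essS (S - D) v" using v by (simp add: essS_def)
      then have "essS S v" using essS_closed[of "S - D" S v] closed_compl[OF clD] SV v by auto
      then show False using v D_def by (auto simp: DS_def)
    qed
    have crit: "critS K" if K: "K \<subseteq> D" "K \<noteq> {}" "closed D K" "conn K" for K
    proof -
      have KS: "K \<subseteq> S" using K DS' by auto
      have KV: "K \<subseteq> V" using KS SV by auto
      have clK: "closed S K" using closed_trans[OF clD K(3) K(1)] .
      have allE: "\<forall>v\<in>K. essS K v"
      proof
        fix v assume v: "v \<in> K"
        then have "essS S v" using K(1) D_def by (auto simp: DS_def)
        then show "essS K v" using essS_closed[OF KS SV clK v] by simp
      qed
      have coreK: "Core (K - {v})" if v: "v \<in> K" for v
      proof -
        have "K - {v} \<subset> S" using KS v by auto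
        then show ?thesis by (rule IH)
      qed
      have "m K = 1"
        by (rule gallai_from[OF KV K(2) K(4) allE]) (use coreK in \<open>auto simp: Core_def\<close>)
      then show ?thesis using allE by (simp add: critS_def)
    qed
    show ?thesis unfolding Core_def using True clD m0 crit D_def by simp
  qed
qed

end


context gr begin

lemma reach_mono: "(radj B)\<^sup>*\<^sup>* x y \<Longrightarrow> B \<subseteq> T \<Longrightarrow> (radj T)\<^sup>*\<^sup>* x y"
proof (induct rule: rtranclp_induct)
  case base then show ?case by simp
next
  case (step y z)
  then have "radj T y z" by (auto simp: radj_def)
  then show ?case using step by (auto intro: rtranclp.rtrancl_into_rtrancl)
qed

lemma closed_compT:
  assumes "B \<subseteq> T" "closed T B" "y \<in> B"
  shows "compT B y = compT T y"
proof
  show "compT B y \<subseteq> compT T y" using reach_mono assms(1) by (auto simp: compT_def)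
next
  show "compT T y \<subseteq> compT B y"
  proof
    fix z assume "z \<in> compT T y"
    then have r: "(radj T)\<^sup>*\<^sup>* y z" by (auto simp: compT_def)
    have "z \<in> B \<and> (radj B)\<^sup>*\<^sup>* y z" using r
    proof (induct rule: rtranclp_induct)
      case base then show ?case using assms(3) by simp
    next
      case (step a b)
      then have aB: "a \<in> B" and bT: "b \<in> T" and e: "{a, b} \<in> E" by (auto simp: radj_def)
      have bB: "b \<in> B" using assms(2) aB bT e unfolding closed_def by blast
      have "radj B a b" using aB bB e by (simp add: radj_def)
      then show ?case using step(3) bB by (auto intro: rtranclp.rtrancl_into_rtrancl)
    qed
    then show "z \<in> compT B y" by (auto simp: compT_def)
  qed
qed

lemma compT_eq: "y \<in> compT T x \<Longrightarrow> compT T y = compT T x"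
proof -
  assume y: "y \<in> compT T x"
  then have xy: "(radj T)\<^sup>*\<^sup>* x y" by (auto simp: compT_def)
  have yx: "(radj T)\<^sup>*\<^sup>* y x" using reach_sym[OF xy] .
  show ?thesis unfolding compT_def using xy yx by (auto intro: rtranclp_trans)
qed

definition compsS :: "'a set \<Rightarrow> 'a set set" where
  "compsS T = {C. \<exists>v\<in>T. C = compT T v}"

lemma compsS_fin: "T \<subseteq> V \<Longrightarrow> finite (compsS T)"
proof -
  assume "T \<subseteq> V"
  then have "finite (Pow T)" using fin_sub by simp
  moreover have "compsS T \<subseteq> Pow T" using compT_sub by (auto simp: compsS_def)
  ultimately show ?thesis using finite_subset by blast
qed

lemma m_empty: "m {} = 0" by (simp add: m_def P_empty)

lemma m_sum_comps: "T \<subseteq> V \<Longrightarrow> m T = (\<Sum>C\<in>compsS T. m C)"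
proof (induct "card T" arbitrary: T rule: less_induct)
  case less
  show ?case
  proof (cases "T = {}")
    case True then show ?thesis by (simp add: compsS_def m_empty)
  next
    case False
    then obtain x where x: "x \<in> T" by blast
    define C0 where "C0 = compT T x"
    have fT: "finite T" using fin_sub less(2) by blast
    have C0T: "C0 \<subseteq> T" using compT_sub C0_def by simp
    have xC0: "x \<in> C0" using compT_mem[OF x] C0_def by simp
    have clC0: "closed T C0" using compT_closed[OF x] C0_def by simp
    have mT: "m T = m C0 + m (T - C0)" using m_closed[OF C0T less(2) clC0] .
    have cl2: "closed T (T - C0)" using closed_compl[OF clC0] .
    have c: "card (T - C0) < card T"
    proof (rule psubset_card_mono[OF fT])
      show "T - C0 \<subset> T" using xC0 x by blast
    qed
    have IH: "m (T - C0) = (\<Sum>C\<in>compsS (T - C0). m C)" using less(1)[OF c] less(2) by auto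
    have cs: "compsS (T - C0) = compsS T - {C0}"
    proof
      show "compsS (T - C0) \<subseteq> compsS T - {C0}"
      proof
        fix C assume "C \<in> compsS (T - C0)"
        then obtain y where y: "y \<in> T - C0" "C = compT (T - C0) y" by (auto simp: compsS_def)
        have "C = compT T y" using closed_compT[OF _ cl2 y(1)] y(2) by simp
        moreover have "y \<in> compT T y" using compT_mem y(1) by simp
        ultimately show "C \<in> compsS T - {C0}" using y(1) by (auto simp: compsS_def)
      qed
    next
      show "compsS T - {C0} \<subseteq> compsS (T - C0)"
      proof
        fix C assume C: "C \<in> compsS T - {C0}"
        then obtain y where y: "y \<in> T" "C = compT T y" "C \<noteq> C0" by (auto simp: compsS_def)
        have yC0: "y \<notin> C0"
        proof
          assume "y \<in> C0"
          then have "compT T y = C0" using compT_eq C0_def by simp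
          then show False using y by simp
        qed
        have "C = compT (T - C0) y" using closed_compT[OF _ cl2, of y] y yC0 by simp
        then show "C \<in> compsS (T - C0)" using y yC0 by (auto simp: compsS_def)
      qed
    qed
    have C0in: "C0 \<in> compsS T" using x C0_def by (auto simp: compsS_def)
    have "(\<Sum>C\<in>compsS T. m C) = m C0 + (\<Sum>C\<in>compsS T - {C0}. m C)"
      using sum.remove[OF compsS_fin[OF less(2)] C0in] .
    then show ?thesis using mT IH cs by simp
  qed
qed

lemma main_loc:
  defines "A \<equiv> AS V"
  shows "AS (V - A) = {} \<and> DS (V - A) = DS V \<and> PS (V - A) = PS V \<and> NS (V - A) = NS V"
    and "card {C \<in> compsS (V - A). critS ((V - A) \<inter> C)} = card A + m V"
    and "\<forall>C \<in> compsS (V - A). critS ((V - A) \<inter> C) \<or> m ((V - A) \<inter> C) = 0"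
    and "compsS (DS V) = {C \<in> compsS (V - A). critS ((V - A) \<inter> C)}"
proof -
  have cV: "Core V" using core by simp
  define S' where "S' = V - A"
  define D where "D = DS V"
  have S'V: "S' \<subseteq> V" using S'_def by auto
  have cr: "m S' = m V + card A" "DS S' = D" "NS S' = NS V" "PS S' = PS V" "AS S' = {}"
      "closed S' D" "m (S' - D) = 0"
      "\<And>K. K \<subseteq> D \<Longrightarrow> K \<noteq> {} \<Longrightarrow> closed D K \<Longrightarrow> conn K \<Longrightarrow> critS K"
    using cV unfolding Core_def A_def S'_def D_def by auto
  have DS': "D \<subseteq> S'" using cr(2) DS_sub by metis
  show "AS (V - A) = {} \<and> DS (V - A) = DS V \<and> PS (V - A) = PS V \<and> NS (V - A) = NS V"
    using cr S'_def D_def by simp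
  have cls: "(C \<subseteq> D \<and> critS C) \<or> (C \<inter> D = {} \<and> m C = 0)" if C: "C \<in> compsS S'" for C
  proof -
    obtain x where x: "x \<in> S'" "C = compT S' x" using C by (auto simp: compsS_def)
    have CS: "C \<subseteq> S'" using compT_sub x by simp
    have xC: "x \<in> C" using compT_mem x by simp
    have clC: "closed S' C" using compT_closed x by simp
    have cC: "conn C" using compT_conn x by simp
    show ?thesis
    proof (cases "C \<inter> D = {}")
      case False
      have "closed C (C \<inter> D)" using cr(6) CS unfolding closed_def by blast
      then have "C \<inter> D = C" using cC False unfolding conn_def by blast
      then have CD: "C \<subseteq> D" by blast
      have "closed D C" using clC CD DS' unfolding closed_def by blast
      then have "critS C" using cr(8)[OF CD] xC cC by blast
      then show ?thesis using CD by blast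
    next
      case True
      have CSD: "C \<subseteq> S' - D" using True CS by blast
      have "closed (S' - D) C" using clC CS unfolding closed_def by blast
      then have "m (S' - D) = m C + m (S' - D - C)" using m_closed[OF CSD] S'V by auto
      then show ?thesis using cr(7) True by simp
    qed
  qed
  have critiff: "critS C \<longleftrightarrow> C \<subseteq> D" if C: "C \<in> compsS S'" for C
  proof -
    have "C \<noteq> {}" using C compT_mem by (auto simp: compsS_def)
    then show ?thesis using cls[OF C] by (auto simp: critS_def)
  qed
  have inter: "\<And>C. C \<in> compsS S' \<Longrightarrow> S' \<inter> C = C" using compT_sub by (auto simp: compsS_def)
  show "\<forall>C \<in> compsS (V - A). critS ((V - A) \<inter> C) \<or> m ((V - A) \<inter> C) = 0"
  proof
    fix C assume C: "C \<in> compsS (V - A)"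
    then have C': "C \<in> compsS S'" unfolding S'_def .
    have "critS C \<or> m C = 0" using cls[OF C'] by (elim disjE conjE) simp_all
    moreover have "(V - A) \<inter> C = C" using inter[OF C'] unfolding S'_def .
    ultimately show "critS ((V - A) \<inter> C) \<or> m ((V - A) \<inter> C) = 0" by simp
  qed
  have compsD: "compsS D = {C \<in> compsS S'. critS C}"
  proof
    show "compsS D \<subseteq> {C \<in> compsS S'. critS C}"
    proof
      fix C assume "C \<in> compsS D"
      then obtain y where y: "y \<in> D" "C = compT D y" by (auto simp: compsS_def)
      have "C = compT S' y" using closed_compT[OF DS' cr(6) y(1)] y(2) by simp
      then have "C \<in> compsS S'" using y(1) DS' by (auto simp: compsS_def)
      moreover have "C \<subseteq> D" using y compT_sub by simp
      ultimately show "C \<in> {C \<in> compsS S'. critS C}" using critiff by blast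
    qed
  next
    show "{C \<in> compsS S'. critS C} \<subseteq> compsS D"
    proof
      fix C assume C: "C \<in> {C \<in> compsS S'. critS C}"
      then obtain x where x: "x \<in> S'" "C = compT S' x" by (auto simp: compsS_def)
      have CD: "C \<subseteq> D" using C critiff by blast
      have xD: "x \<in> D" using CD compT_mem x by blast
      have "C = compT D x" using closed_compT[OF DS' cr(6) xD] x by simp
      then show "C \<in> compsS D" using xD by (auto simp: compsS_def)
    qed
  qed
  show "compsS (DS V) = {C \<in> compsS (V - A). critS ((V - A) \<inter> C)}"
    using compsD inter S'_def D_def by auto
  have DV: "D \<subseteq> V" using DS' S'V by auto
  have "m S' = m D + m (S' - D)" using m_closed[OF DS' S'V cr(6)] .
  then have mD: "m D = m V + card A" using cr(1,7) by simp
  have "m D = (\<Sum>C\<in>compsS D. m C)" using m_sum_comps[OF DV] .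
  also have "\<dots> = (\<Sum>C\<in>compsS D. 1)" using compsD by (intro sum.cong) (auto simp: critS_def)
  finally have "card (compsS D) = m V + card A" using mD by simp
  then show "card {C \<in> compsS (V - A). critS ((V - A) \<inter> C)} = card A + m V"
    using compsD inter S'_def
    by (metis (no_types, lifting) add.commute mem_Collect_eq Collect_cong)
qed

end


context gr begin

lemma G_ind: "induced G V = G"
proof -
  have "{e \<in> E. e \<subseteq> V} = E" using edge_sub by auto
  then show ?thesis by (simp add: induced_def verts_def edges_def)
qed

lemma tr_mult: "mult w w1 th (induced G S) = m S"
  by (simp add: mult_def m_def P_def)

lemma tr_verts: "S \<subseteq> V \<Longrightarrow> verts (induced G S) = S"
  by (auto simp: verts_induced)

lemma tr_del_set: "S \<subseteq> V \<Longrightarrow> del_set (induced G S) A = induced G (S - A)"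
  by (simp add: del_set_def induced_induced tr_verts Int_absorb1 Diff_subset)

lemma tr_del_vert: "S \<subseteq> V \<Longrightarrow> del_vert (induced G S) v = induced G (S - {v})"
  by (simp add: del_vert_def tr_del_set)

lemma tr_ess: "S \<subseteq> V \<Longrightarrow> essential w w1 th (induced G S) v \<longleftrightarrow> essS S v"
  by (auto simp: essential_def essS_def tr_verts tr_del_vert tr_mult)

lemma tr_neu: "S \<subseteq> V \<Longrightarrow> neutral w w1 th (induced G S) v \<longleftrightarrow> neuS S v"
  by (auto simp: neutral_def neuS_def tr_verts tr_del_vert tr_mult)

lemma tr_pos: "S \<subseteq> V \<Longrightarrow> positive w w1 th (induced G S) v \<longleftrightarrow> posS S v"
  by (auto simp: positive_def posS_def tr_verts tr_del_vert tr_mult)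

lemma tr_adj: "adj (induced G S) = radj S"
  by (auto simp: adj_def radj_def edges_induced fun_eq_iff)

lemma tr_spec: "S \<subseteq> V \<Longrightarrow> special w w1 th (induced G S) v \<longleftrightarrow> specS S v"
  unfolding special_def specS_def tr_adj tr_verts
  by (auto simp: tr_ess radj_def essS_def)

lemma tr_D: "S \<subseteq> V \<Longrightarrow> Dset w w1 th (induced G S) = DS S"
  by (simp add: Dset_def DS_def tr_ess)
lemma tr_A: "S \<subseteq> V \<Longrightarrow> Aset w w1 th (induced G S) = AS S"
  by (simp add: Aset_def AS_def tr_spec)
lemma tr_N: "S \<subseteq> V \<Longrightarrow> Nset w w1 th (induced G S) = NS S"
  by (simp add: Nset_def NS_def tr_neu)
lemma tr_P: "S \<subseteq> V \<Longrightarrow> Pset w w1 th (induced G S) = PS S"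
  by (simp add: Pset_def PS_def tr_pos tr_spec)

lemma tr_crit: "S \<subseteq> V \<Longrightarrow> critical w w1 th (induced G S) \<longleftrightarrow> critS S"
  by (simp add: critical_def critS_def tr_verts tr_ess tr_mult)

lemma tr_comps: "S \<subseteq> V \<Longrightarrow> components (induced G S) = compsS S"
  by (simp add: components_def compsS_def tr_verts tr_adj compT_def)

end

theorem corollary5p14:
  fixes G :: "'a graph" and w :: "'a set \<Rightarrow> complex" and w1 :: "'a \<Rightarrow> real"
    and \<theta> :: real
  assumes "simple_graph G" and "edge_weight G w"
  defines "A \<equiv> Aset w w1 \<theta> G"
  shows "(Aset w w1 \<theta> (del_set G A) = {} \<and>
         Dset w w1 \<theta> (del_set G A) = Dset w w1 \<theta> G \<and>
         Pset w w1 \<theta> (del_set G A) = Pset w w1 \<theta> G \<and>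
         Nset w w1 \<theta> (del_set G A) = Nset w w1 \<theta> G) \<and>
         (card {C \<in> components (del_set G A). critical w w1 \<theta> (induced (del_set G A) C)}
           = card A + mult w w1 \<theta> G) \<and>
         (\<forall>C \<in> components (del_set G A).
           critical w w1 \<theta> (induced (del_set G A) C) \<or>
           mult w w1 \<theta> (induced (del_set G A) C) = 0) \<and>
         (components (induced G (Dset w w1 \<theta> G))
           = {C \<in> components (del_set G A). critical w w1 \<theta> (induced (del_set G A) C)})"
proof -
  interpret gr G w w1 \<theta> using assms(1,2) by unfold_locales
  let ?V = "verts G"
  have VV: "?V \<subseteq> ?V" by simp
  have GI: "induced G ?V = G" by (rule G_ind)
  have AA: "A = AS ?V" unfolding A_def using tr_A[OF VV] GI by simp
  have del: "del_set G A = induced G (?V - A)" using tr_del_set[OF VV, of A] GI by simp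
  have SV: "?V - A \<subseteq> ?V" by auto
  have ind: "\<And>C. induced (del_set G A) C = induced G ((?V - A) \<inter> C)"
    unfolding del by (simp add: induced_induced)
  have SCV: "\<And>C. (?V - A) \<inter> C \<subseteq> ?V" by auto
  have DV: "DS ?V \<subseteq> ?V" by (rule DS_sub)
  note ml = main_loc[unfolded AA[symmetric]]
  have p1: "Aset w w1 \<theta> (del_set G A) = {} \<and>
         Dset w w1 \<theta> (del_set G A) = Dset w w1 \<theta> G \<and>
         Pset w w1 \<theta> (del_set G A) = Pset w w1 \<theta> G \<and>
         Nset w w1 \<theta> (del_set G A) = Nset w w1 \<theta> G"
    unfolding del tr_A[OF SV] tr_D[OF SV] tr_P[OF SV] tr_N[OF SV]
    using ml(1) tr_D[OF VV] tr_P[OF VV] tr_N[OF VV] GI by simp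
  have cset: "{C \<in> components (del_set G A). critical w w1 \<theta> (induced (del_set G A) C)} =
      {C \<in> compsS (?V - A). critS ((?V - A) \<inter> C)}"
    unfolding del tr_comps[OF SV] using tr_crit[OF SCV] by (simp add: induced_induced)
  have p2: "card {C \<in> components (del_set G A). critical w w1 \<theta> (induced (del_set G A) C)}
           = card A + mult w w1 \<theta> G"
    unfolding cset using ml(2) tr_mult[of ?V] GI by simp
  have p3: "\<forall>C \<in> components (del_set G A).
           critical w w1 \<theta> (induced (del_set G A) C) \<or>
           mult w w1 \<theta> (induced (del_set G A) C) = 0"
    unfolding del tr_comps[OF SV] using ml(3) tr_crit[OF SCV] tr_mult by (simp add: induced_induced)
  have p4: "components (induced G (Dset w w1 \<theta> G))
           = {C \<in> components (del_set G A). critical w w1 \<theta> (induced (del_set G A) C)}"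
    unfolding cset using ml(4) tr_D[OF VV] GI tr_comps[OF DV] by simp
  show ?thesis using p1 p2 p3 p4 by blast
qed


end
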